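(* Consider the DSA algorithm described in the context, under conditions (a)–(c) on the weights and assuming every $f_{n,i}$ is differentiable and $\mu$-strongly convex with $L$-Lipschitz gradient. Let $\eta$ be any constant with $$\eta\in\left(\frac{L^2q_{\max}}{\mu q_{\min}}+\frac{L^2}{\mu}-L,\ \infty\right),$$ let the stepsize satisfy $\alpha\in(0,\gamma/(2\eta))$, and let $c$ be any constant with $$c\in\left(\frac{4\alpha Lq_{\max}}{\eta},\ \frac{4\alpha\mu q_{\min}}{L}-\frac{2\alpha q_{\min}(2L-\mu)}{\eta}\right).$$ Then there exists a constant $0<\delta<1$ such that for all $t$, $$\mathbb{E}\left[\|\mathbf{u}^{t+1}-\mathbf{u}^*\|_{\mathbf{G}}^2+c\,p^{t+1}\mid\mathcal{F}^t\right]\le(1-\delta)\left(\|\mathbf{u}^t-\mathbf{u}^*\|_{\mathbf{G}}^2+c\,p^t\right).$$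
   Context: Problem: a connected network of $N$ nodes; node $n$ holds $q_n$ functions $f_{n,i}:\mathbb{R}^p\to\mathbb{R}$, each differentiable, $\mu$-strongly convex, with $L$-Lipschitz gradient; $f_n:=\frac1{q_n}\sum_i f_{n,i}$, $\tilde{\mathbf{x}}^*:=\arg\min_{\mathbf{x}}\sum_n f_n(\mathbf{x})$; $q_{\min}:=\min_n q_n$, $q_{\max}:=\max_n q_n$. For $\mathbf{x}=[\mathbf{x}_1;\dots;\mathbf{x}_N]\in\mathbb{R}^{Np}$, $f(\mathbf{x}):=\sum_n f_n(\mathbf{x}_n)$, $\mathbf{x}^*:=[\tilde{\mathbf{x}}^*;\dots;\tilde{\mathbf{x}}^*]$. Weights: $\mathbf{W},\tilde{\mathbf{W}}\in\mathbb{R}^{N\times N}$ with entries nonzero only for $m=n$ or $m$ a neighbor of $n$, satisfying (a) symmetry; (b) $\mathrm{null}(\mathbf{I}-\tilde{\mathbf{W}})\supseteq\mathrm{span}(\mathbf{1})$, $\mathrm{null}(\mathbf{I}-\mathbf{W})=\mathrm{span}(\mathbf{1})$, $\mathrm{null}(\tilde{\mathbf{W}}-\mathbf{W})=\mathrm{span}(\mathbf{1})$; (c) $\mathbf{W}\preceq\tilde{\mathbf{W}}\preceq(\mathbf{I}+\mathbf{W})/2$, $\tilde{\mathbf{W}}\succ0$. $\mathbf{Z}:=\mathbf{W}\otimes\mathbf{I}_p$, $\tilde{\mathbf{Z}}:=\tilde{\mathbf{W}}\otimes\mathbf{I}_p$, $\mathbf{U}:=(\tilde{\mathbf{Z}}-\mathbf{Z})^{1/2}$;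 $\gamma$ is the smallest eigenvalue of $\tilde{\mathbf{Z}}$. DSA: stepsize $\alpha>0$, initial $\mathbf{x}_n^0$, $\mathbf{y}_{n,i}^0=\mathbf{x}_n^0$. At each $t\ge0$ node $n$ draws $i_n^t$ uniformly from $\{1,\dots,q_n\}$ independently of the past, sets $\hat{\mathbf{g}}_n^t:=\nabla f_{n,i_n^t}(\mathbf{x}_n^t)-\nabla f_{n,i_n^t}(\mathbf{y}_{n,i_n^t}^t)+\frac1{q_n}\sum_{i}\nabla f_{n,i}(\mathbf{y}_{n,i}^t)$, and $\mathbf{y}_{n,i}^{t+1}=\mathbf{x}_n^t$ if $i=i_n^t$, else $\mathbf{y}_{n,i}^{t+1}=\mathbf{y}_{n,i}^t$. With $\hat{\mathbf{g}}^t:=[\hat{\mathbf{g}}_1^t;\dots;\hat{\mathbf{g}}_N^t]$: $\mathbf{x}^1=\mathbf{Z}\mathbf{x}^0-\alpha\hat{\mathbf{g}}^0$, $\mathbf{x}^{t+1}=(\mathbf{I}+\mathbf{Z})\mathbf{x}^t-\tilde{\mathbf{Z}}\mathbf{x}^{t-1}-\alpha[\hat{\mathbf{g}}^t-\hat{\mathbf{g}}^{t-1}]$ for $t\ge1$. Dual variables $\mathbf{v}^t:=\sum_{s=0}^t\mathbf{U}\mathbf{x}^s$; $\mathbf{v}^*$ is the vector in the column space of $\mathbf{U}$ with $\alpha\nabla f(\mathbf{x}^* )+\mathbf{U}\mathbf{v}^*=\mathbf{0}$. $\mathbf{u}^t:=[\mathbf{x}^t;\mathbf{v}^t]$, $\mathbf{u}^*:=[\mathbf{x}^*;\mathbf{v}^*]$,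 $\mathbf{G}:=\mathrm{diag}(\tilde{\mathbf{Z}},\mathbf{I})$, $\|\mathbf{z}\|_{\mathbf{G}}^2:=\mathbf{z}^T\mathbf{G}\mathbf{z}$. $\mathcal{F}^t$ is the sigma-algebra of the history up to time $t$. Define $$p^t:=\sum_{n=1}^N\frac1{q_n}\sum_{i=1}^{q_n}\left(f_{n,i}(\mathbf{y}_{n,i}^t)-f_{n,i}(\tilde{\mathbf{x}}^* )-\nabla f_{n,i}(\tilde{\mathbf{x}}^* )^T(\mathbf{y}_{n,i}^t-\tilde{\mathbf{x}}^* )\right).$$ *)

theory Defs
  imports "HOL-Analysis.Analysis" "HOL-Probability.Probability"
begin

definition strongly_convex_on :: "'a::real_inner set \<Rightarrow> real \<Rightarrow> ('a \<Rightarrow> real) \<Rightarrow> bool" where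
  "strongly_convex_on S mu f \<longleftrightarrow> convex_on S (\<lambda>x. f x - mu / 2 * (norm x)\<^sup>2)"

text \<open>Network vectors x = [x_1; ...; x_N] in R^{Np} are elements of real^'p^'n.
  Kronecker action (A tensor I_p) x.\<close>
definition Zop :: "real^'n^'n \<Rightarrow> real^'p^'n \<Rightarrow> real^'p^'n" where
  "Zop A x = (\<chi> n. \<Sum>m\<in>UNIV. (A$n$m) *\<^sub>R (x$m))"

definition min_eig_kron :: "real^'n^'n \<Rightarrow> 'p::finite itself \<Rightarrow> real" where
  "min_eig_kron A TYPE_p = Min {lam. \<exists>x::real^'p^'n. x \<noteq> 0 \<and> Zop A x = lam *\<^sub>R x}"

definition dsa_grad :: "('n \<Rightarrow> nat) \<Rightarrow> ('n \<Rightarrow> nat \<Rightarrow> real^'p \<Rightarrow> real^'p) \<Rightarrow> real^'p^'n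
    \<Rightarrow> ('n \<Rightarrow> nat \<Rightarrow> real^'p) \<Rightarrow> ('n \<Rightarrow> nat) \<Rightarrow> real^'p^'n" where
  "dsa_grad q gf x y j = (\<chi> n. gf n (j n) (x$n) - gf n (j n) (y n (j n))
        + (1 / real (q n)) *\<^sub>R (\<Sum>i\<in>{1..q n}. gf n i (y n i)))"

text \<open>State after t steps: (x^{t-1}, x^t, y^t, hat g^{t-1}) (first and last components are
  dummies for t = 0). omega t n is the index i_n^t drawn at time t.\<close>
primrec dsa :: "('n::finite \<Rightarrow> nat) \<Rightarrow> ('n \<Rightarrow> nat \<Rightarrow> real^'p \<Rightarrow> real^'p) \<Rightarrow> real^'n^'n \<Rightarrow> real^'n^'n
    \<Rightarrow> real \<Rightarrow> real^'p^'n \<Rightarrow> (nat \<Rightarrow> 'n \<Rightarrow> nat) \<Rightarrow> nat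
    \<Rightarrow> (real^'p^'n) \<times> (real^'p^'n) \<times> ('n \<Rightarrow> nat \<Rightarrow> real^'p) \<times> (real^'p^'n)" where
  "dsa q gf W Wt alpha x0 omega 0 = (x0, x0, (\<lambda>n i. x0$n), 0)"
| "dsa q gf W Wt alpha x0 omega (Suc t) =
     (case dsa q gf W Wt alpha x0 omega t of (xp, x, y, gp) \<Rightarrow>
        let g = dsa_grad q gf x y (omega t);
            x' = (if t = 0 then Zop W x - alpha *\<^sub>R g
                  else x + Zop W x - Zop Wt xp - alpha *\<^sub>R (g - gp));
            y' = (\<lambda>n i. if i = omega t n then x$n else y n i)
        in (x, x', y', g))"

definition dsa_x where "dsa_x q gf W Wt alpha x0 omega t = fst (snd (dsa q gf W Wt alpha x0 omega t))"
definition dsa_y where "dsa_y q gf W Wt alpha x0 omega t = fst (snd (snd (dsa q gf W Wt alpha x0 omega t)))"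

text \<open>Dual variable v^t = sum_{s=0}^t U x^s.\<close>
definition dsa_v where
  "dsa_v q gf W Wt U alpha x0 omega t = (\<Sum>s\<in>{0..t}. Zop U (dsa_x q gf W Wt alpha x0 omega s))"

definition dsa_p :: "('n::finite \<Rightarrow> nat) \<Rightarrow> ('n \<Rightarrow> nat \<Rightarrow> real^'p \<Rightarrow> real) \<Rightarrow> ('n \<Rightarrow> nat \<Rightarrow> real^'p \<Rightarrow> real^'p)
    \<Rightarrow> real^'n^'n \<Rightarrow> real^'n^'n \<Rightarrow> real \<Rightarrow> real^'p^'n \<Rightarrow> real^'p \<Rightarrow> (nat \<Rightarrow> 'n \<Rightarrow> nat) \<Rightarrow> nat \<Rightarrow> real" where
  "dsa_p q f gf W Wt alpha x0 xs omega t =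
     (\<Sum>n\<in>UNIV. (1 / real (q n)) * (\<Sum>i\<in>{1..q n}.
        let yi = dsa_y q gf W Wt alpha x0 omega t n i in
        f n i yi - f n i xs - gf n i xs \<bullet> (yi - xs)))"

text \<open>Lyapunov quantity ||u^t - u^*||_G^2 + c p^t, with G = diag(Zt, I).\<close>
definition dsa_lyap where
  "dsa_lyap q f gf W Wt U alpha c x0 xs vs omega t =
     (let dx = dsa_x q gf W Wt alpha x0 omega t - (\<chi> n. xs);
          dv = dsa_v q gf W Wt U alpha x0 omega t - vs
      in dx \<bullet> Zop Wt dx + (norm dv)\<^sup>2 + c * dsa_p q f gf W Wt alpha x0 xs omega t)"

end

theory Submission
  imports Defs
begin

lemma line_deriv:
  fixes f :: "'a::real_inner \<Rightarrow> real"
  assumes "\<forall>z. (f has_derivative (\<lambda>h. g z \<bullet> h)) (at z)"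
  shows "((\<lambda>t. f (x + t *\<^sub>R w)) has_real_derivative (g (x + t *\<^sub>R w) \<bullet> w)) (at t)"
proof -
  have a: "((\<lambda>t. x + t *\<^sub>R w) has_derivative (\<lambda>h. h *\<^sub>R w)) (at t)"
    by (auto intro!: derivative_eq_intros)
  have "((\<lambda>t. f (x + t *\<^sub>R w)) has_derivative (\<lambda>h. g (x + t *\<^sub>R w) \<bullet> (h *\<^sub>R w))) (at t)"
    using has_derivative_compose[OF a assms[rule_format, of "x + t *\<^sub>R w"]] by simp
  moreover have "(\<lambda>h. g (x + t *\<^sub>R w) \<bullet> (h *\<^sub>R w)) = (*) (g (x + t *\<^sub>R w) \<bullet> w)"
    by (auto simp: mult.commute)
  ultimately show ?thesis unfolding has_field_derivative_def by simp
qed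

lemma descent:
  fixes f :: "'a::real_inner \<Rightarrow> real"
  assumes d: "\<forall>z. (f has_derivative (\<lambda>h. g z \<bullet> h)) (at z)"
    and l: "L-lipschitz_on UNIV g"
  shows "f y \<le> f x + g x \<bullet> (y - x) + L / 2 * (norm (y - x))\<^sup>2"
proof -
  define w where "w = y - x"
  define h where "h s = f (x + s *\<^sub>R w) - s * (g x \<bullet> w) - L / 2 * s\<^sup>2 * (norm w)\<^sup>2" for s
  have "h 1 \<le> h 0"
  proof (rule DERIV_nonpos_imp_nonincreasing[of 0 1 h])
    fix s :: real assume s: "0 \<le> s" "s \<le> 1"
    have "(h has_real_derivative (g (x + s *\<^sub>R w) \<bullet> w - (g x \<bullet> w) - L / 2 * (2 * s) * (norm w)\<^sup>2)) (at s)"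
      unfolding h_def
      by (rule line_deriv[OF d] derivative_eq_intros refl | simp)+
    moreover have "g (x + s *\<^sub>R w) \<bullet> w - (g x \<bullet> w) - L / 2 * (2 * s) * (norm w)\<^sup>2 \<le> 0"
    proof -
      have "g (x + s *\<^sub>R w) \<bullet> w - (g x \<bullet> w) = (g (x + s *\<^sub>R w) - g x) \<bullet> w"
        by (simp add: inner_diff_left)
      also have "\<dots> \<le> norm (g (x + s *\<^sub>R w) - g x) * norm w" by (rule norm_cauchy_schwarz)
      also have "norm (g (x + s *\<^sub>R w) - g x) \<le> L * norm (s *\<^sub>R w)"
        using lipschitz_onD[OF l, of "x + s *\<^sub>R w" x] by (simp add: dist_norm)
      hence "norm (g (x + s *\<^sub>R w) - g x) * norm w \<le> L * norm (s *\<^sub>R w) * norm w"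
        by (simp add: mult_right_mono)
      also have "\<dots> = L * s * (norm w)\<^sup>2" using s by (simp add: power2_eq_square)
      finally show ?thesis by simp
    qed
    ultimately show "\<exists>y. DERIV h s :> y \<and> y \<le> 0" by blast
  qed simp
  thus ?thesis by (simp add: h_def w_def)
qed

lemma sc_ineq:
  fixes f :: "'a::real_inner \<Rightarrow> real"
  assumes d: "\<forall>z. (f has_derivative (\<lambda>h. g z \<bullet> h)) (at z)"
    and sc: "strongly_convex_on UNIV mu f"
  shows "f x + g x \<bullet> (y - x) + mu / 2 * (norm (y - x))\<^sup>2 \<le> f y"
proof -
  define w where "w = y - x"
  define phi where "phi t = f (x + t *\<^sub>R w) - mu / 2 * (norm (x + t *\<^sub>R w))\<^sup>2" for t
  have cv: "convex_on UNIV (\<lambda>z. f z - mu / 2 * (norm z)\<^sup>2)" using sc by (simp add: strongly_convex_on_def)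
  have "convex_on UNIV phi"
  proof (rule convex_onI)
    fix r s t :: real assume r: "0 < r" "r < 1"
    have e: "x + ((1 - r) * s + r * t) *\<^sub>R w = (1 - r) *\<^sub>R (x + s *\<^sub>R w) + r *\<^sub>R (x + t *\<^sub>R w)"
      by (simp add: algebra_simps flip: scaleR_add_left)
    show "phi ((1 - r) *\<^sub>R s + r *\<^sub>R t) \<le> (1 - r) * phi s + r * phi t"
      using convex_onD[OF cv, of r "x + s *\<^sub>R w" "x + t *\<^sub>R w"] r
      unfolding phi_def by (simp add: e)
  qed simp
  moreover have "(phi has_real_derivative (g x \<bullet> w - mu * (x \<bullet> w))) (at 0)"
  proof -
    have n: "\<And>t. (norm (x + t *\<^sub>R w))\<^sup>2 = x \<bullet> x + 2 * t * (x \<bullet> w) + t\<^sup>2 * (w \<bullet> w)"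
      unfolding power2_norm_eq_inner by (simp add: inner_add_left inner_add_right inner_commute power2_eq_square algebra_simps)
    have "(phi has_real_derivative (g (x + 0 *\<^sub>R w) \<bullet> w - mu / 2 * (0 + 2 * 1 * (x \<bullet> w) + 2 * 0 * (w \<bullet> w)))) (at 0)"
      unfolding phi_def n
      by (rule line_deriv[OF d] derivative_eq_intros refl | simp)+
    thus ?thesis by (simp add: algebra_simps)
  qed
  ultimately have "phi 1 - phi 0 \<ge> (g x \<bullet> w - mu * (x \<bullet> w)) * (1 - 0)"
    by (intro convex_on_imp_above_tangent[where A=UNIV]) auto
  moreover have "x + w = y" by (simp add: w_def)
  ultimately have 1: "f y - mu / 2 * (norm y)\<^sup>2 - (f x - mu / 2 * (norm x)\<^sup>2) \<ge> g x \<bullet> w - mu * (x \<bullet> w)"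
    unfolding phi_def by simp
  have 2: "(norm y)\<^sup>2 - (norm x)\<^sup>2 - 2 * (x \<bullet> w) = (norm w)\<^sup>2"
    unfolding w_def power2_norm_eq_inner by (simp add: inner_diff_left inner_diff_right inner_commute)
  have "mu / 2 * (norm w)\<^sup>2 = mu / 2 * (norm y)\<^sup>2 - mu / 2 * (norm x)\<^sup>2 - mu * (x \<bullet> w)"
    unfolding 2[symmetric] by (simp add: algebra_simps)
  with 1 show ?thesis unfolding w_def by linarith

qed

lemma cocoercive:
  fixes f :: "'a::real_inner \<Rightarrow> real"
  assumes d: "\<forall>z. (f has_derivative (\<lambda>h. g z \<bullet> h)) (at z)"
    and l: "L-lipschitz_on UNIV g"
    and sc: "strongly_convex_on UNIV mu f" and mu: "0 \<le> mu" and L: "0 < L"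
  shows "(norm (g y - g x))\<^sup>2 \<le> 2 * L * (f y - f x - g x \<bullet> (y - x))"
proof -
  define G where "G = g y - g x"
  define z where "z = y - (1 / L) *\<^sub>R G"
  have 1: "f x + g x \<bullet> (z - x) \<le> f z"
  proof -
    have "0 \<le> mu / 2 * (norm (z - x))\<^sup>2" using mu by simp
    thus ?thesis using sc_ineq[OF d sc, of x z] by linarith
  qed
  have 2: "f z \<le> f y + g y \<bullet> (z - y) + L / 2 * (norm (z - y))\<^sup>2"
    by (rule descent[OF d l])
  have zy: "z - y = - (1 / L) *\<^sub>R G" by (simp add: z_def)
  have 3: "g y \<bullet> (z - y) - g x \<bullet> (z - y) = - (1 / L) * (norm G)\<^sup>2"
    unfolding zy G_def by (simp add: inner_diff_left power2_norm_eq_inner algebra_simps)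
  have 4: "L / 2 * (norm (z - y))\<^sup>2 = (1 / (2 * L)) * (norm G)\<^sup>2"
    unfolding zy using L by (simp add: power2_eq_square field_simps)
  have 5: "g x \<bullet> (z - x) = g x \<bullet> (z - y) + g x \<bullet> (y - x)"
    by (simp add: inner_diff_right)
  have 6: "(1 / L) * (norm G)\<^sup>2 - (1 / (2 * L)) * (norm G)\<^sup>2 = (1 / (2 * L)) * (norm G)\<^sup>2"
    using L by (simp add: field_simps)
  from 1 2 3 4 5 6 have 7: "(1 / (2 * L)) * (norm G)\<^sup>2 \<le> f y - f x - g x \<bullet> (y - x)"
    by linarith
  have "(norm G)\<^sup>2 = 2 * L * ((1 / (2 * L)) * (norm G)\<^sup>2)" using L by simp
  also have "\<dots> \<le> 2 * L * (f y - f x - g x \<bullet> (y - x))" using 7 L by (intro mult_left_mono) auto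
  finally show ?thesis unfolding G_def .
qed


lemma var_id:
  fixes z :: "nat \<Rightarrow> 'v::real_inner"
  assumes I: "finite I" "card I > 0"
  defines "zb \<equiv> (1 / real (card I)) *\<^sub>R (\<Sum>i\<in>I. z i)"
  shows "(1 / real (card I)) * (\<Sum>i\<in>I. (norm (z i))\<^sup>2)
       = (1 / real (card I)) * (\<Sum>i\<in>I. (norm (z i - zb))\<^sup>2) + (norm zb)\<^sup>2"
proof -
  define k where "k = real (card I)"
  have k0: "0 < k" using I by (simp add: k_def)
  have sz: "(\<Sum>i\<in>I. z i) = k *\<^sub>R zb" using k0 by (simp add: zb_def k_def)
  have "(\<Sum>i\<in>I. (norm (z i - zb))\<^sup>2) = (\<Sum>i\<in>I. (norm (z i))\<^sup>2 - 2 * (z i \<bullet> zb) + (norm zb)\<^sup>2)"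
    by (intro sum.cong refl) (simp add: power2_norm_eq_inner inner_diff_left inner_diff_right inner_commute)
  also have "\<dots> = (\<Sum>i\<in>I. (norm (z i))\<^sup>2) - 2 * ((\<Sum>i\<in>I. z i) \<bullet> zb) + k * (norm zb)\<^sup>2"
    by (simp add: sum.distrib sum_subtractf sum_distrib_left inner_sum_left k_def)
  also have "\<dots> = (\<Sum>i\<in>I. (norm (z i))\<^sup>2) - k * (norm zb)\<^sup>2"
    unfolding sz by (simp add: power2_norm_eq_inner)
  finally show ?thesis using k0 unfolding k_def[symmetric] by (simp add: field_simps)
qed

lemma var_bound:
  fixes a b :: "nat \<Rightarrow> 'v::real_inner"
  assumes I: "finite I" "card I > 0"
  defines "ab \<equiv> (1 / real (card I)) *\<^sub>R (\<Sum>i\<in>I. a i)"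
  defines "bb \<equiv> (1 / real (card I)) *\<^sub>R (\<Sum>i\<in>I. b i)"
  shows "(1 / real (card I)) * (\<Sum>i\<in>I. (norm (a i - b i + bb))\<^sup>2)
       \<le> 2 * ((1 / real (card I)) * (\<Sum>i\<in>I. (norm (a i))\<^sup>2))
         + 2 * ((1 / real (card I)) * (\<Sum>i\<in>I. (norm (b i))\<^sup>2)) - (norm ab)\<^sup>2"
proof -
  define k where "k = real (card I)"
  have k0: "0 < k" using I by (simp add: k_def)
  define z where "z i = a i - b i + bb" for i
  have zb: "(1 / k) *\<^sub>R (\<Sum>i\<in>I. z i) = ab"
  proof -
    have "(\<Sum>i\<in>I. z i) = (\<Sum>i\<in>I. a i) - (\<Sum>i\<in>I. b i) + k *\<^sub>R bb"
      by (simp add: z_def sum.distrib sum_subtractf k_def sum_constant_scaleR)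
    also have "(\<Sum>i\<in>I. b i) = k *\<^sub>R bb" using k0 by (simp add: bb_def k_def)
    finally show ?thesis using k0 by (simp add: ab_def k_def)
  qed
  have 1: "(1 / k) * (\<Sum>i\<in>I. (norm (z i))\<^sup>2) = (1 / k) * (\<Sum>i\<in>I. (norm (z i - ab))\<^sup>2) + (norm ab)\<^sup>2"
    using var_id[OF I, of z] zb unfolding k_def by simp
  have 2: "(norm (z i - ab))\<^sup>2 \<le> 2 * (norm (a i - ab))\<^sup>2 + 2 * (norm (b i - bb))\<^sup>2" for i
  proof -
    have e: "z i - ab = (a i - ab) - (b i - bb)" by (simp add: z_def)
    have p: "(norm (u - v))\<^sup>2 \<le> 2 * (norm u)\<^sup>2 + 2 * (norm v)\<^sup>2" for u v :: 'v
    proof -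
      have "0 \<le> (norm (u + v))\<^sup>2" by simp
      moreover have "(norm (u - v))\<^sup>2 + (norm (u + v))\<^sup>2 = 2 * (norm u)\<^sup>2 + 2 * (norm v)\<^sup>2"
        unfolding power2_norm_eq_inner by (simp add: inner_diff_left inner_diff_right inner_add_left inner_add_right inner_commute)
      ultimately show ?thesis by linarith
    qed
    show ?thesis unfolding e by (rule p)
  qed
  have 3: "(1 / k) * (\<Sum>i\<in>I. (norm (z i - ab))\<^sup>2) \<le>
      2 * ((1 / k) * (\<Sum>i\<in>I. (norm (a i - ab))\<^sup>2)) + 2 * ((1 / k) * (\<Sum>i\<in>I. (norm (b i - bb))\<^sup>2))"
  proof -
    have "(\<Sum>i\<in>I. (norm (z i - ab))\<^sup>2) \<le> (\<Sum>i\<in>I. 2 * (norm (a i - ab))\<^sup>2 + 2 * (norm (b i - bb))\<^sup>2)"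
      by (rule sum_mono[OF 2])
    thus ?thesis using k0 by (simp add: sum.distrib sum_distrib_left[symmetric] field_simps)
  qed
  have 4: "(1 / k) * (\<Sum>i\<in>I. (norm (a i))\<^sup>2) = (1 / k) * (\<Sum>i\<in>I. (norm (a i - ab))\<^sup>2) + (norm ab)\<^sup>2"
    using var_id[OF I, of a] unfolding k_def ab_def by simp
  have 5: "(1 / k) * (\<Sum>i\<in>I. (norm (b i))\<^sup>2) = (1 / k) * (\<Sum>i\<in>I. (norm (b i - bb))\<^sup>2) + (norm bb)\<^sup>2"
    using var_id[OF I, of b] unfolding k_def bb_def by simp
  have 6: "0 \<le> (norm bb)\<^sup>2" by simp
  from 1 3 4 5 6 show ?thesis unfolding z_def k_def by linarith
qed


lemma bregman_facts:
  fixes f :: "'a::real_inner \<Rightarrow> real" and xs :: 'a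
  assumes d: "\<forall>z. (f has_derivative (\<lambda>h. g z \<bullet> h)) (at z)"
    and l: "L-lipschitz_on UNIV g"
    and sc: "strongly_convex_on UNIV mu f" and mu: "0 \<le> mu" and L: "0 < L"
  defines "D z \<equiv> f z - f xs - g xs \<bullet> (z - xs)"
  shows "mu / 2 * (norm (z - xs))\<^sup>2 \<le> D z"
    and "D z \<le> L / 2 * (norm (z - xs))\<^sup>2"
    and "(norm (g z - g xs))\<^sup>2 \<le> 2 * L * D z"
    and "D z + mu / 2 * (norm (z - xs))\<^sup>2 \<le> (g z - g xs) \<bullet> (z - xs)"
proof -
  show "mu / 2 * (norm (z - xs))\<^sup>2 \<le> D z"
    using sc_ineq[OF d sc, of xs z] unfolding D_def by linarith
  show "D z \<le> L / 2 * (norm (z - xs))\<^sup>2"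
    using descent[OF d l, of z xs] unfolding D_def by linarith
  show "(norm (g z - g xs))\<^sup>2 \<le> 2 * L * D z"
    using cocoercive[OF d l sc mu L, of z xs] unfolding D_def .
  have 1: "f z + g z \<bullet> (xs - z) + mu / 2 * (norm (xs - z))\<^sup>2 \<le> f xs"
    by (rule sc_ineq[OF d sc])
  have 2: "g z \<bullet> (xs - z) = - (g z \<bullet> (z - xs))" by (simp add: inner_diff_right)
  have 3: "norm (xs - z) = norm (z - xs)" by (rule norm_minus_commute)
  have 4: "(g z - g xs) \<bullet> (z - xs) = g z \<bullet> (z - xs) - g xs \<bullet> (z - xs)" by (simp add: inner_diff_left)
  show "D z + mu / 2 * (norm (z - xs))\<^sup>2 \<le> (g z - g xs) \<bullet> (z - xs)"
    using 1 2 4 unfolding D_def 3 by linarith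
qed

lemma mono_strength:
  fixes a e :: "'v::real_inner"
  assumes "mu * (norm e)\<^sup>2 \<le> a \<bullet> e" "0 \<le> mu"
  shows "mu\<^sup>2 * (norm e)\<^sup>2 \<le> (norm a)\<^sup>2"
proof -
  have "mu * (norm e)\<^sup>2 \<le> norm a * norm e" using assms(1) norm_cauchy_schwarz[of a e] by linarith
  hence "mu * norm e \<le> norm a" if "norm e > 0" using that by (simp add: power2_eq_square)
  hence "mu * norm e \<le> norm a" using assms(2) by (cases "norm e > 0") auto
  hence "(mu * norm e)\<^sup>2 \<le> (norm a)\<^sup>2" using assms(2) by (intro power_mono) auto
  thus ?thesis by (simp add: power_mult_distrib)
qed


lemma node_bounds:
  fixes f :: "nat \<Rightarrow> 'a::real_inner \<Rightarrow> real" and g :: "nat \<Rightarrow> 'a \<Rightarrow> 'a"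
    and k :: nat and x xs :: 'a and y :: "nat \<Rightarrow> 'a"
  assumes k: "1 \<le> k"
    and d: "\<forall>i\<in>{1..k}. \<forall>z. (f i has_derivative (\<lambda>h. g i z \<bullet> h)) (at z)"
    and l: "\<forall>i\<in>{1..k}. L-lipschitz_on UNIV (g i)"
    and sc: "\<forall>i\<in>{1..k}. strongly_convex_on UNIV mu (f i)"
    and mu: "0 < mu" and L: "0 < L"
  defines "D \<equiv> \<lambda>i z. f i z - f i xs - g i xs \<bullet> (z - xs)"
  defines "a \<equiv> \<lambda>i. g i x - g i xs" and "b \<equiv> \<lambda>i. g i (y i) - g i xs"
  defines "bb \<equiv> (1 / real k) *\<^sub>R (\<Sum>i\<in>{1..k}. b i)"
  defines "F \<equiv> (1 / real k) * (\<Sum>i\<in>{1..k}. D i x)" and "P \<equiv> (1 / real k) * (\<Sum>i\<in>{1..k}. D i (y i))"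
  shows "(1 / real k) * (\<Sum>i\<in>{1..k}. (norm (a i - b i + bb))\<^sup>2) \<le> 4 * L * F + 4 * L * P - mu\<^sup>2 * (norm (x - xs))\<^sup>2"
    and "F + mu / 2 * (norm (x - xs))\<^sup>2 \<le> (1 / real k) * (\<Sum>i\<in>{1..k}. (a i - b i + bb) \<bullet> (x - xs))"
    and "0 \<le> F" and "F \<le> L / 2 * (norm (x - xs))\<^sup>2" and "0 \<le> P"
    and "(1 / real k) * (\<Sum>i\<in>{1..k}. (1 / real k) * (\<Sum>l\<in>{1..k}. D i (if i = l then x else y i)))
         = F / real k + (1 - 1 / real k) * P"
proof -
  define I where "I = {1..k}"
  have I: "finite I" "card I > 0" and cI: "card I = k" using k by (auto simp: I_def)
  have k0: "0 < real k" using k by simp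
  define e where "e = x - xs"
  have di: "\<forall>z. (f i has_derivative (\<lambda>h. g i z \<bullet> h)) (at z)" if "i \<in> I" for i using d that unfolding I_def by blast
  have li: "L-lipschitz_on UNIV (g i)" if "i \<in> I" for i using l that unfolding I_def by blast
  have sci: "strongly_convex_on UNIV mu (f i)" if "i \<in> I" for i using sc that unfolding I_def by blast
  note bf = bregman_facts[OF di li sci less_imp_le[OF mu] L]
  have B1: "mu / 2 * (norm (z - xs))\<^sup>2 \<le> D i z" if "i \<in> I" for i z
    using bf(1)[OF that that that, where z=z and xs=xs] unfolding D_def by simp
  have B2: "D i z \<le> L / 2 * (norm (z - xs))\<^sup>2" if "i \<in> I" for i z
    using bf(2)[OF that that that, where z=z and xs=xs] unfolding D_def by simp
  have B3: "(norm (g i z - g i xs))\<^sup>2 \<le> 2 * L * D i z" if "i \<in> I" for i z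
    using bf(3)[OF that that that, where z=z and xs=xs] unfolding D_def by simp
  have B4: "D i z + mu / 2 * (norm (z - xs))\<^sup>2 \<le> (g i z - g i xs) \<bullet> (z - xs)" if "i \<in> I" for i z
    using bf(4)[OF that that that, where z=z and xs=xs] unfolding D_def by simp
  have Dpos: "0 \<le> D i z" if "i \<in> I" for i z
  proof -
    have "0 \<le> mu / 2 * (norm (z - xs))\<^sup>2" using mu by simp
    thus ?thesis using B1[OF that, of z] by linarith
  qed
  have avg_mono: "(1 / real k) * (\<Sum>i\<in>I. u i) \<le> (1 / real k) * (\<Sum>i\<in>I. v i)" if "\<And>i. i \<in> I \<Longrightarrow> u i \<le> v i" for u v
    using sum_mono[of I u v] that k0 by (simp add: divide_right_mono)
  have avg_const: "(1 / real k) * (\<Sum>i\<in>I. c) = c" for c using cI k0 by simp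
  show F0: "0 \<le> F"
  proof -
    have "(1 / real k) * (\<Sum>i\<in>I. 0) \<le> (1 / real k) * (\<Sum>i\<in>I. D i x)"
      by (rule avg_mono) (rule Dpos)
    thus ?thesis unfolding F_def I_def by simp
  qed
  show "0 \<le> P"
  proof -
    have "(1 / real k) * (\<Sum>i\<in>I. 0) \<le> (1 / real k) * (\<Sum>i\<in>I. D i (y i))"
      by (rule avg_mono) (rule Dpos)
    thus ?thesis unfolding P_def I_def by simp
  qed
  show "F \<le> L / 2 * (norm (x - xs))\<^sup>2"
    using avg_mono[of "\<lambda>i. D i x" "\<lambda>i. L / 2 * (norm (x - xs))\<^sup>2"] B2 avg_const unfolding F_def I_def by simp
  have ab: "(1 / real k) *\<^sub>R (\<Sum>i\<in>I. a i) \<bullet> e = (1 / real k) * (\<Sum>i\<in>I. a i \<bullet> e)"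
    by (simp add: inner_sum_left)
  have H1: "F + mu / 2 * (norm e)\<^sup>2 \<le> (1 / real k) * (\<Sum>i\<in>I. a i \<bullet> e)"
  proof -
    have "(1 / real k) * (\<Sum>i\<in>I. D i x + mu / 2 * (norm e)\<^sup>2) \<le> (1 / real k) * (\<Sum>i\<in>I. a i \<bullet> e)"
      by (rule avg_mono) (use B4 in \<open>simp add: a_def e_def\<close>)
    moreover have "(1 / real k) * (\<Sum>i\<in>I. D i x + mu / 2 * (norm e)\<^sup>2) = F + mu / 2 * (norm e)\<^sup>2"
      using avg_const unfolding F_def I_def by (simp add: sum.distrib distrib_left)
    ultimately show ?thesis by simp
  qed
  have sumb: "(1 / real k) * (\<Sum>i\<in>I. bb \<bullet> e) = bb \<bullet> e" by (rule avg_const)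
  have sumb2: "(1 / real k) * (\<Sum>i\<in>I. b i \<bullet> e) = bb \<bullet> e"
    by (simp add: bb_def I_def inner_sum_left)
  show "F + mu / 2 * (norm (x - xs))\<^sup>2 \<le> (1 / real k) * (\<Sum>i\<in>{1..k}. (a i - b i + bb) \<bullet> (x - xs))"
  proof -
    have "(1 / real k) * (\<Sum>i\<in>I. (a i - b i + bb) \<bullet> e)
      = (1 / real k) * (\<Sum>i\<in>I. a i \<bullet> e) - (1 / real k) * (\<Sum>i\<in>I. b i \<bullet> e) + (1 / real k) * (\<Sum>i\<in>I. bb \<bullet> e)"
      by (simp add: inner_diff_left inner_add_left sum.distrib sum_subtractf distrib_left right_diff_distrib)
    thus ?thesis using H1 sumb sumb2 unfolding I_def e_def by linarith
  qed
  show "(1 / real k) * (\<Sum>i\<in>{1..k}. (norm (a i - b i + bb))\<^sup>2) \<le> 4 * L * F + 4 * L * P - mu\<^sup>2 * (norm (x - xs))\<^sup>2"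
  proof -
    have V: "(1 / real k) * (\<Sum>i\<in>I. (norm (a i - b i + bb))\<^sup>2)
       \<le> 2 * ((1 / real k) * (\<Sum>i\<in>I. (norm (a i))\<^sup>2)) + 2 * ((1 / real k) * (\<Sum>i\<in>I. (norm (b i))\<^sup>2))
         - (norm ((1 / real k) *\<^sub>R (\<Sum>i\<in>I. a i)))\<^sup>2"
      using var_bound[OF I, of a b] unfolding cI bb_def I_def by simp
    have Va: "(1 / real k) * (\<Sum>i\<in>I. (norm (a i))\<^sup>2) \<le> 2 * L * F"
    proof -
      have "(1 / real k) * (\<Sum>i\<in>I. (norm (a i))\<^sup>2) \<le> (1 / real k) * (\<Sum>i\<in>I. 2 * L * D i x)"
        by (rule avg_mono) (use B3 in \<open>simp add: a_def\<close>)
      moreover have "(\<Sum>i\<in>I. 2 * L * D i x) = 2 * L * (\<Sum>i\<in>I. D i x)" by (rule sum_distrib_left[symmetric])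
      ultimately show ?thesis unfolding F_def I_def[symmetric] by simp
    qed
    have Vb: "(1 / real k) * (\<Sum>i\<in>I. (norm (b i))\<^sup>2) \<le> 2 * L * P"
    proof -
      have "(1 / real k) * (\<Sum>i\<in>I. (norm (b i))\<^sup>2) \<le> (1 / real k) * (\<Sum>i\<in>I. 2 * L * D i (y i))"
        by (rule avg_mono) (use B3 in \<open>simp add: b_def\<close>)
      moreover have "(\<Sum>i\<in>I. 2 * L * D i (y i)) = 2 * L * (\<Sum>i\<in>I. D i (y i))" by (rule sum_distrib_left[symmetric])
      ultimately show ?thesis unfolding P_def I_def[symmetric] by simp
    qed
    have Vc: "mu\<^sup>2 * (norm e)\<^sup>2 \<le> (norm ((1 / real k) *\<^sub>R (\<Sum>i\<in>I. a i)))\<^sup>2"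
    proof (rule mono_strength)
      have "(1 / real k) * (\<Sum>i\<in>I. mu * (norm e)\<^sup>2) \<le> (1 / real k) * (\<Sum>i\<in>I. a i \<bullet> e)"
      proof (rule avg_mono)
        fix i assume i: "i \<in> I"
        have "D i x + mu / 2 * (norm e)\<^sup>2 \<le> a i \<bullet> e" using B4[OF i, of x] unfolding a_def e_def .
        moreover have "mu / 2 * (norm e)\<^sup>2 \<le> D i x" using B1[OF i, of x] unfolding e_def .
        ultimately show "mu * (norm e)\<^sup>2 \<le> a i \<bullet> e" by linarith
      qed
      thus "mu * (norm e)\<^sup>2 \<le> (1 / real k) *\<^sub>R (\<Sum>i\<in>I. a i) \<bullet> e" unfolding ab avg_const .
    qed (use mu in simp)
    show ?thesis using V Va Vb Vc unfolding I_def e_def by linarith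
  qed
  show "(1 / real k) * (\<Sum>i\<in>{1..k}. (1 / real k) * (\<Sum>l\<in>{1..k}. D i (if i = l then x else y i)))
         = F / real k + (1 - 1 / real k) * P"
  proof -
    have s: "(\<Sum>l\<in>I. D i (if i = l then x else y i)) = D i x + (real k - 1) * D i (y i)" if "i \<in> I" for i
    proof -
      have "(\<Sum>l\<in>I. D i (if i = l then x else y i)) = D i x + (\<Sum>l\<in>I - {i}. D i (if i = l then x else y i))"
        using that I(1) by (simp add: sum.remove)
      also have "(\<Sum>l\<in>I - {i}. D i (if i = l then x else y i)) = (\<Sum>l\<in>I - {i}. D i (y i))"
        by (intro sum.cong) auto
      also have "\<dots> = (real k - 1) * D i (y i)" using that I(1) cI k by (simp add: of_nat_diff)
      finally show ?thesis .
    qed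
    have "(\<Sum>i\<in>I. (1 / real k) * (\<Sum>l\<in>I. D i (if i = l then x else y i)))
        = (\<Sum>i\<in>I. (1 / real k) * (D i x + (real k - 1) * D i (y i)))"
      by (intro sum.cong refl) (simp add: s)
    also have "\<dots> = (\<Sum>i\<in>I. (1 / real k) * D i x + ((real k - 1) / real k) * D i (y i))"
      by (intro sum.cong refl) (simp add: distrib_left)
    also have "\<dots> = (1 / real k) * (\<Sum>i\<in>I. D i x) + ((real k - 1) / real k) * (\<Sum>i\<in>I. D i (y i))"
      by (simp only: sum.distrib sum_distrib_left)
    finally show ?thesis unfolding F_def P_def I_def using k0 by (simp add: field_simps)
  qed
qed


lemma Zop_nth: "Zop A x $ n = (\<Sum>m\<in>UNIV. (A$n$m) *\<^sub>R (x$m))"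
  by (simp add: Zop_def)

lemma Zop_add: "Zop A (x + y) = Zop A x + Zop A y"
  by (simp add: Zop_def vec_eq_iff scaleR_add_right sum.distrib)

lemma Zop_diff: "Zop A (x - y) = Zop A x - Zop A y"
  by (simp add: Zop_def vec_eq_iff scaleR_diff_right sum_subtractf)

lemma Zop_scale: "Zop A (c *\<^sub>R x) = c *\<^sub>R Zop A x"
  by (simp add: Zop_def vec_eq_iff scaleR_sum_right mult_ac)

lemma Zop_zero: "Zop A 0 = 0"
  by (simp add: Zop_def vec_eq_iff)

lemma Zop_sum: "finite S \<Longrightarrow> Zop A (\<Sum>s\<in>S. x s) = (\<Sum>s\<in>S. Zop A (x s))"
  by (induction S rule: finite_induct) (auto simp: Zop_zero Zop_add)

lemma linear_Zop: "linear (Zop A)"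
  by (rule linearI) (simp_all add: Zop_add Zop_scale)

lemma Zop_mdiff: "Zop (A - B) x = Zop A x - Zop B x"
  by (simp add: Zop_def vec_eq_iff scaleR_diff_left sum_subtractf)

lemma Zop_comp: "Zop A (Zop B x) = Zop (A ** B) x"
proof -
  have "\<And>n. (\<Sum>m\<in>UNIV. A$n$m *\<^sub>R (\<Sum>k\<in>UNIV. B$m$k *\<^sub>R x$k))
     = (\<Sum>k\<in>UNIV. (\<Sum>m\<in>UNIV. A$n$m * B$m$k) *\<^sub>R x$k)"
  proof -
    fix n
    have "(\<Sum>m\<in>UNIV. A$n$m *\<^sub>R (\<Sum>k\<in>UNIV. B$m$k *\<^sub>R x$k)) = (\<Sum>m\<in>UNIV. \<Sum>k\<in>UNIV. (A$n$m * B$m$k) *\<^sub>R x$k)"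
      by (simp add: scaleR_sum_right)
    also have "\<dots> = (\<Sum>k\<in>UNIV. \<Sum>m\<in>UNIV. (A$n$m * B$m$k) *\<^sub>R x$k)" by (rule sum.swap)
    also have "\<dots> = (\<Sum>k\<in>UNIV. (\<Sum>m\<in>UNIV. A$n$m * B$m$k) *\<^sub>R x$k)" by (simp add: scaleR_sum_left)
    finally show "?thesis n" .
  qed
  thus ?thesis by (simp add: Zop_def vec_eq_iff matrix_matrix_mult_def)
qed

lemma Zop_sym:
  assumes "transpose A = A"
  shows "Zop A x \<bullet> y = x \<bullet> Zop A y"
proof -
  have s: "\<And>n m. A$n$m = A$m$n" proof -
    fix n m have "transpose A $ n $ m = A $ m $ n" by (simp add: transpose_def)
    thus "A$n$m = A$m$n" using assms by simp
  qed
  have "Zop A x \<bullet> y = (\<Sum>n\<in>UNIV. \<Sum>m\<in>UNIV. A$n$m * (x$m \<bullet> y$n))"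
    unfolding inner_vec_def[of "Zop A x" y] Zop_nth by (simp only: inner_sum_left inner_scaleR_left)
  also have "\<dots> = (\<Sum>m\<in>UNIV. \<Sum>n\<in>UNIV. A$m$n * (x$m \<bullet> y$n))"
    by (subst sum.swap) (intro sum.cong refl, subst s, rule refl)
  also have "\<dots> = x \<bullet> Zop A y"
    unfolding inner_vec_def[of x "Zop A y"] Zop_nth by (simp only: inner_sum_right inner_scaleR_right)
  finally show ?thesis .
qed

definition colk :: "real^'p^'n \<Rightarrow> 'p \<Rightarrow> real^'n" where
  "colk x k = (\<chi> n. x$n$k)"

lemma Zop_quad_col: "x \<bullet> Zop A x = (\<Sum>k\<in>UNIV. colk x k \<bullet> (A *v colk x k))"
proof -
  have "x \<bullet> Zop A x = (\<Sum>n\<in>UNIV. \<Sum>k\<in>UNIV. x$n$k * (\<Sum>m\<in>UNIV. A$n$m * x$m$k))"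
    by (simp add: Zop_def inner_vec_def)
  also have "\<dots> = (\<Sum>k\<in>UNIV. \<Sum>n\<in>UNIV. x$n$k * (\<Sum>m\<in>UNIV. A$n$m * x$m$k))"
    by (rule sum.swap)
  also have "\<dots> = (\<Sum>k\<in>UNIV. colk x k \<bullet> (A *v colk x k))"
    by (simp add: colk_def inner_vec_def matrix_vector_mult_def)
  finally show ?thesis .
qed

lemma Zop_const:
  assumes "A *v vec 1 = vec 1"
  shows "Zop A (\<chi> n. c) = (\<chi> n. c)"
proof -
  have "\<And>n. (\<Sum>m\<in>UNIV. A$n$m) = 1"
    using assms by (simp add: vec_eq_iff matrix_vector_mult_def)
  thus ?thesis by (simp add: Zop_def vec_eq_iff flip: scaleR_sum_left)
qed

lemma Zop_const0:
  assumes "A *v vec 1 = 0"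
  shows "Zop A (\<chi> n. c) = 0"
proof -
  have "\<And>n. (\<Sum>m\<in>UNIV. A$n$m) = 0"
    using assms by (simp add: vec_eq_iff matrix_vector_mult_def)
  thus ?thesis by (simp add: Zop_def vec_eq_iff flip: scaleR_sum_left)
qed

lemma quad_nonneg:
  assumes "\<forall>z. 0 \<le> z \<bullet> (A *v z)"
  shows "0 \<le> x \<bullet> Zop A x"
  unfolding Zop_quad_col using assms by (simp add: sum_nonneg)


lemma eig_finite:
  assumes sym: "transpose A = A"
  shows "finite {lam. \<exists>x::real^'p^'n. x \<noteq> 0 \<and> Zop A x = lam *\<^sub>R x}"
proof -
  define E where "E = {lam. \<exists>x::real^'p^'n. x \<noteq> 0 \<and> Zop A x = lam *\<^sub>R x}"
  define ev where "ev lam = (SOME x::real^'p^'n. x \<noteq> 0 \<and> Zop A x = lam *\<^sub>R x)" for lam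
  have ev: "ev lam \<noteq> 0 \<and> Zop A (ev lam) = lam *\<^sub>R ev lam" if "lam \<in> E" for lam
    using that unfolding E_def ev_def by (metis (mono_tags, lifting) mem_Collect_eq someI_ex)
  have orth: "ev a \<bullet> ev b = 0" if "a \<in> E" "b \<in> E" "a \<noteq> b" for a b
  proof -
    have "a * (ev a \<bullet> ev b) = Zop A (ev a) \<bullet> ev b" using ev[OF that(1)] by simp
    also have "\<dots> = ev a \<bullet> Zop A (ev b)" by (rule Zop_sym[OF sym])
    also have "\<dots> = b * (ev a \<bullet> ev b)" using ev[OF that(2)] by simp
    finally have "(a - b) * (ev a \<bullet> ev b) = 0" by (simp add: algebra_simps)
    thus ?thesis using that(3) by simp
  qed
  have inj: "inj_on ev E"
  proof (rule inj_onI)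
    fix a b assume ab: "a \<in> E" "b \<in> E" "ev a = ev b"
    show "a = b"
    proof (rule ccontr)
      assume "a \<noteq> b"
      hence "ev a \<bullet> ev a = 0" using orth[OF ab(1,2)] ab(3) by simp
      thus False using ev[OF ab(1)] by simp
    qed
  qed
  have "pairwise orthogonal (ev ` E)"
    unfolding pairwise_def orthogonal_def using orth by (metis imageE)
  moreover have "0 \<notin> ev ` E" using ev by auto
  ultimately have "independent (ev ` E)" by (rule pairwise_orthogonal_independent)
  hence "finite (ev ` E)" by (rule finiteI_independent)
  thus ?thesis using inj finite_imageD unfolding E_def by blast
qed

lemma quad_expand: "transpose A = A \<Longrightarrow> (x0 + s *\<^sub>R y) \<bullet> Zop A (x0 + s *\<^sub>R y) = x0 \<bullet> Zop A x0 + 2 * s * (y \<bullet> Zop A x0) + s\<^sup>2 * (y \<bullet> Zop A y)"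
proof -
  assume sym: "transpose A = A"
  have e: "x0 \<bullet> Zop A y = y \<bullet> Zop A x0" using Zop_sym[OF sym, of x0 y] by (simp add: inner_commute)
  have "(x0 + s *\<^sub>R y) \<bullet> Zop A (x0 + s *\<^sub>R y) = x0 \<bullet> Zop A x0 + s * (x0 \<bullet> Zop A y) + s * (y \<bullet> Zop A x0) + s * s * (y \<bullet> Zop A y)"
    by (simp only: Zop_add Zop_scale inner_add_left inner_add_right inner_scaleR_left inner_scaleR_right) (simp add: algebra_simps)
  thus ?thesis unfolding e by (simp add: power2_eq_square algebra_simps)
qed
lemma norm_expand: "x0 \<bullet> x0 = 1 \<Longrightarrow> (norm (x0 + s *\<^sub>R y))\<^sup>2 = 1 + 2 * s * (y \<bullet> x0) + s\<^sup>2 * (norm y)\<^sup>2"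
proof -
  assume x: "x0 \<bullet> x0 = 1"
  have "(norm (x0 + s *\<^sub>R y))\<^sup>2 = x0 \<bullet> x0 + s * (x0 \<bullet> y) + s * (y \<bullet> x0) + s * s * (y \<bullet> y)"
    unfolding power2_norm_eq_inner by (simp only: inner_add_left inner_add_right inner_scaleR_left inner_scaleR_right) (simp add: algebra_simps)
  moreover have "s * s * (y \<bullet> y) = s\<^sup>2 * (norm y)\<^sup>2" proof -
    have "(norm y)\<^sup>2 = y \<bullet> y" by (rule power2_norm_eq_inner)
    thus ?thesis by (simp add: power2_eq_square)
  qed
  moreover have "x0 \<bullet> y = y \<bullet> x0" by (rule inner_commute)
  ultimately show ?thesis using x by simp
qed

lemma quad_homog: "(c *\<^sub>R x) \<bullet> Zop A (c *\<^sub>R x) = c\<^sup>2 * (x \<bullet> Zop A x)"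
  by (simp add: Zop_scale power2_eq_square)

lemma gamma_bound:
  assumes sym: "transpose A = A"
  shows "min_eig_kron A TYPE('p) * (norm x)\<^sup>2 \<le> x \<bullet> Zop A (x::real^'p::finite^'n::finite)"
proof -
  define Q where "Q x = x \<bullet> Zop A x" for x :: "real^'p^'n"
  have cQ: "continuous_on UNIV Q" unfolding Q_def
    using linear_Zop[of A] by (intro continuous_intros linear_continuous_on) (simp add: linear_conv_bounded_linear)
  obtain x0 :: "real^'p^'n" where x0: "x0 \<in> sphere 0 1" "\<forall>y\<in>sphere 0 1. Q x0 \<le> Q y"
  proof -
    have "sphere (0::real^'p^'n) 1 \<noteq> {}" by (simp add: sphere_eq_empty)
    moreover have "continuous_on (sphere (0::real^'p^'n) 1) Q" using continuous_on_subset[OF cQ] by blast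
    ultimately show ?thesis using continuous_attains_inf[of "sphere (0::real^'p^'n) 1" Q] that by auto
  qed
  define m where "m = Q x0"
  have lb: "m * (norm y)\<^sup>2 \<le> Q y" for y
  proof (cases "y = 0")
    case True thus ?thesis by (simp add: Q_def Zop_zero)
  next
    case False
    have "(1 / norm y) *\<^sub>R y \<in> sphere 0 1" using False by simp
    hence "m \<le> Q ((1 / norm y) *\<^sub>R y)" using x0 m_def by blast
    also have "\<dots> = Q y / (norm y)\<^sup>2" unfolding Q_def quad_homog by (simp add: power2_eq_square field_simps)
    finally show ?thesis using False by (simp add: field_simps)
  qed
  have nx0: "norm x0 = 1" using x0 by simp
  have x0x0: "x0 \<bullet> x0 = 1" using nx0 power2_norm_eq_inner[of x0] by simp
  define r where "r = Zop A x0 - m *\<^sub>R x0"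
  have key: "0 \<le> 2 * s * (y \<bullet> r) + s\<^sup>2 * (Q y - m * (norm y)\<^sup>2)" for s y
  proof -
    have A: "m * (norm (x0 + s *\<^sub>R y))\<^sup>2 \<le> Q (x0 + s *\<^sub>R y)" by (rule lb)
    have B: "Q (x0 + s *\<^sub>R y) = m + 2 * s * (y \<bullet> Zop A x0) + s\<^sup>2 * Q y"
      unfolding Q_def m_def by (rule quad_expand[OF sym])
    have n2: "(norm (x0 + s *\<^sub>R y))\<^sup>2 = 1 + 2 * s * (y \<bullet> x0) + s\<^sup>2 * (norm y)\<^sup>2"
      by (rule norm_expand[OF x0x0])
    have C: "m * (norm (x0 + s *\<^sub>R y))\<^sup>2 = m + 2 * s * (m * (y \<bullet> x0)) + s\<^sup>2 * (m * (norm y)\<^sup>2)"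
      unfolding n2 by (simp add: algebra_simps)
    have D: "2 * s * (y \<bullet> r) = 2 * s * (y \<bullet> Zop A x0) - 2 * s * (m * (y \<bullet> x0))"
      by (simp add: r_def inner_diff_right algebra_simps)
    have E: "s\<^sup>2 * (Q y - m * (norm y)\<^sup>2) = s\<^sup>2 * Q y - s\<^sup>2 * (m * (norm y)\<^sup>2)"
      by (simp add: algebra_simps)
    from A B C D E show ?thesis by linarith
  qed
  have "r = 0"
  proof (rule ccontr)
    assume rn: "r \<noteq> 0"
    define N where "N = r \<bullet> r"
    have N0: "0 < N" using rn unfolding N_def by simp
    define b where "b = Q r - m * (norm r)\<^sup>2"
    have b0: "0 \<le> b" unfolding b_def using lb by simp
    define e where "e = N / (b + 1)"
    have e0: "0 < e" unfolding e_def using N0 b0 by simp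
    have "e * b < N" unfolding e_def using N0 b0 by (simp add: field_simps)
    hence "0 < e * (2 * N - e * b)" using e0 N0 by simp
    moreover have "0 \<le> 2 * (- e) * N + (- e)\<^sup>2 * b" using key[of "- e" r] unfolding b_def N_def .
    ultimately show False by (simp add: power2_eq_square algebra_simps)
  qed
  hence ev: "Zop A x0 = m *\<^sub>R x0" unfolding r_def by simp
  have "x0 \<noteq> 0" using nx0 by auto
  hence "m \<in> {lam. \<exists>x::real^'p^'n. x \<noteq> 0 \<and> Zop A x = lam *\<^sub>R x}" using ev by blast
  hence "min_eig_kron A TYPE('p) \<le> m"
    unfolding min_eig_kron_def using eig_finite[OF sym] by (rule Min_le[rotated])
  hence "min_eig_kron A TYPE('p) * (norm x)\<^sup>2 \<le> m * (norm x)\<^sup>2" by (simp add: mult_right_mono)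
  also have "\<dots> \<le> Q x" by (rule lb)
  finally show ?thesis unfolding Q_def .
qed


lemma core_step:
  fixes e v d :: "real^'p::finite^'n::finite"
  assumes Wt_sym: "transpose Wt = Wt" and U_sym: "transpose U = U" and U_sq: "U ** U = Wt - W"
    and l1: "\<forall>z::real^'p^'n. z \<bullet> Zop W z \<le> z \<bullet> Zop Wt z"
    and l2: "\<forall>z::real^'p^'n. 2 * (z \<bullet> Zop Wt z) \<le> z \<bullet> z + z \<bullet> Zop W z"
    and gam: "\<forall>z::real^'p^'n. gamma * (norm z)\<^sup>2 \<le> z \<bullet> Zop Wt z"
    and al: "0 < alpha" and et: "0 < eta"
    and e'_def: "e' = Zop Wt e - alpha *\<^sub>R d - Zop U v"
    and v'_def: "v' = v + Zop U e'"
  shows "e' \<bullet> Zop Wt e' + (norm v')\<^sup>2 - (e \<bullet> Zop Wt e + (norm v)\<^sup>2)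
     \<le> - (gamma - alpha * eta) * (norm (e' - e))\<^sup>2 - 2 * alpha * (d \<bullet> e) + (alpha / eta) * (norm d)\<^sup>2"
proof -
  define w where "w = e' - e"
  have F1: "(norm v')\<^sup>2 = (norm v)\<^sup>2 + 2 * (e' \<bullet> Zop Wt e - alpha * (d \<bullet> e') - e' \<bullet> e') + (e' \<bullet> Zop Wt e' - e' \<bullet> Zop W e')"
  proof -
    have "(norm v')\<^sup>2 = v \<bullet> v + 2 * (v \<bullet> Zop U e') + Zop U e' \<bullet> Zop U e'"
      unfolding v'_def power2_norm_eq_inner by (simp add: inner_add_left inner_add_right inner_commute)
    also have "v \<bullet> Zop U e' = Zop U v \<bullet> e'" using Zop_sym[OF U_sym, of v e'] by simp
    also have "Zop U v = Zop Wt e - alpha *\<^sub>R d - e'" unfolding e'_def by simp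
    also have "Zop U e' \<bullet> Zop U e' = e' \<bullet> Zop U (Zop U e')" by (rule Zop_sym[OF U_sym])
    also have "Zop U (Zop U e') = Zop Wt e' - Zop W e'" by (simp add: Zop_comp U_sq Zop_mdiff)
    finally show ?thesis
      by (simp add: power2_norm_eq_inner inner_diff_left inner_diff_right inner_commute)
  qed
  have F2: "w \<bullet> Zop Wt w = e' \<bullet> Zop Wt e' - 2 * (e' \<bullet> Zop Wt e) + e \<bullet> Zop Wt e"
  proof -
    have s: "e \<bullet> Zop Wt e' = e' \<bullet> Zop Wt e" using Zop_sym[OF Wt_sym, of e e'] by (simp add: inner_commute)
    have "w \<bullet> Zop Wt w = e' \<bullet> Zop Wt e' - e' \<bullet> Zop Wt e - e \<bullet> Zop Wt e' + e \<bullet> Zop Wt e"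
      unfolding w_def by (simp only: Zop_diff inner_diff_left inner_diff_right)
    thus ?thesis using s by simp
  qed
  have F3: "alpha * (d \<bullet> e') = alpha * (d \<bullet> e) + alpha * (d \<bullet> w)"
    by (simp add: w_def inner_diff_right algebra_simps)
  have F4: "2 * (e' \<bullet> Zop Wt e') \<le> e' \<bullet> e' + e' \<bullet> Zop W e'" using l2 by blast
  have F4': "e' \<bullet> Zop W e' \<le> e' \<bullet> Zop Wt e'" using l1 by blast
  have F5: "gamma * (norm w)\<^sup>2 \<le> w \<bullet> Zop Wt w" using gam by blast
  have F6: "0 \<le> (alpha / eta) * (norm d)\<^sup>2 + 2 * (alpha * (d \<bullet> w)) + alpha * eta * (norm w)\<^sup>2"
  proof -
    have "0 \<le> (alpha / eta) * (norm (d + eta *\<^sub>R w))\<^sup>2" using al et by simp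
    also have "(norm (d + eta *\<^sub>R w))\<^sup>2 = (norm d)\<^sup>2 + 2 * eta * (d \<bullet> w) + eta\<^sup>2 * (norm w)\<^sup>2"
      unfolding power2_norm_eq_inner by (simp add: inner_add_left inner_add_right inner_commute power2_eq_square algebra_simps)
    also have "(alpha / eta) * \<dots> = (alpha / eta) * (norm d)\<^sup>2 + 2 * (alpha * (d \<bullet> w)) + alpha * eta * (norm w)\<^sup>2"
      using et by (simp add: field_simps power2_eq_square)
    finally show ?thesis .
  qed
  have G: "- (gamma - alpha * eta) * (norm w)\<^sup>2 = - (gamma * (norm w)\<^sup>2) + alpha * eta * (norm w)\<^sup>2"
    by (simp add: algebra_simps)
  have H: "2 * alpha * (d \<bullet> e) = 2 * (alpha * (d \<bullet> e))" by simp
  show ?thesis unfolding w_def[symmetric] F1 G H using F2 F3 F4 F4' F5 F6 by argo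
qed


lemma dsa_cong:
  "(\<forall>s<t. omega' s = omega s) \<Longrightarrow> dsa q gf W Wt alpha x0 omega' t = dsa q gf W Wt alpha x0 omega t"
  by (induction t) auto

lemma dsa_Suc_eq:
  fixes q gf W Wt alpha x0 omega t
  shows "dsa q gf W Wt alpha x0 omega (Suc t) =
    (dsa_x q gf W Wt alpha x0 omega t,
     (if t = 0 then Zop W (dsa_x q gf W Wt alpha x0 omega t) - alpha *\<^sub>R dsa_grad q gf (dsa_x q gf W Wt alpha x0 omega t) (dsa_y q gf W Wt alpha x0 omega t) (omega t)
      else dsa_x q gf W Wt alpha x0 omega t + Zop W (dsa_x q gf W Wt alpha x0 omega t) - Zop Wt (fst (dsa q gf W Wt alpha x0 omega t))
        - alpha *\<^sub>R (dsa_grad q gf (dsa_x q gf W Wt alpha x0 omega t) (dsa_y q gf W Wt alpha x0 omega t) (omega t) - snd (snd (snd (dsa q gf W Wt alpha x0 omega t))))),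
     (\<lambda>n i. if i = omega t n then dsa_x q gf W Wt alpha x0 omega t $ n else dsa_y q gf W Wt alpha x0 omega t n i),
     dsa_grad q gf (dsa_x q gf W Wt alpha x0 omega t) (dsa_y q gf W Wt alpha x0 omega t) (omega t))"
proof -
  obtain xp x y gp where h: "dsa q gf W Wt alpha x0 omega t = (xp, x, y, gp)" by (cases "dsa q gf W Wt alpha x0 omega t") auto
  have hx: "dsa_x q gf W Wt alpha x0 omega t = x" by (simp add: dsa_x_def h)
  have hy: "dsa_y q gf W Wt alpha x0 omega t = y" by (simp add: dsa_y_def h)
  show ?thesis unfolding hx hy by (simp only: dsa.simps h prod.case Let_def fst_conv snd_conv)
qed

lemma dsa_Suc_parts:
  fixes q gf W Wt alpha x0 omega
  defines "X \<equiv> dsa_x q gf W Wt alpha x0 omega" and "Y \<equiv> dsa_y q gf W Wt alpha x0 omega"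
  defines "G \<equiv> \<lambda>t. dsa_grad q gf (X t) (Y t) (omega t)"
  shows "fst (dsa q gf W Wt alpha x0 omega (Suc t)) = X t"
    and "snd (snd (snd (dsa q gf W Wt alpha x0 omega (Suc t)))) = G t"
    and "Y (Suc t) = (\<lambda>n i. if i = omega t n then X t $ n else Y t n i)"
    and "X (Suc t) = (if t = 0 then Zop W (X t) - alpha *\<^sub>R G t
           else X t + Zop W (X t) - Zop Wt (fst (dsa q gf W Wt alpha x0 omega t))
                - alpha *\<^sub>R (G t - snd (snd (snd (dsa q gf W Wt alpha x0 omega t)))))"
  unfolding X_def Y_def G_def
    apply (simp only: dsa_Suc_eq fst_conv)
   apply (simp only: dsa_Suc_eq fst_conv snd_conv)
  apply (subst dsa_y_def, simp only: dsa_Suc_eq fst_conv snd_conv)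
  apply (subst dsa_x_def, simp only: dsa_Suc_eq fst_conv snd_conv)
  done

lemma dsa_invariant:
  fixes q gf W Wt U alpha x0 omega
  assumes U_sq: "U ** U = Wt - W"
  defines "X \<equiv> dsa_x q gf W Wt alpha x0 omega" and "Y \<equiv> dsa_y q gf W Wt alpha x0 omega"
  defines "G \<equiv> \<lambda>t. dsa_grad q gf (X t) (Y t) (omega t)"
  defines "V \<equiv> dsa_v q gf W Wt U alpha x0 omega"
  shows "X (Suc t) = Zop Wt (X t) - alpha *\<^sub>R G t - Zop U (V t)"
proof (induction t)
  case 0
  have "X 0 = x0" by (simp add: X_def dsa_x_def)
  moreover have "V 0 = Zop U x0" by (simp add: V_def dsa_v_def dsa_x_def)
  moreover have "Zop U (Zop U x0) = Zop Wt x0 - Zop W x0" by (simp add: Zop_comp U_sq Zop_mdiff)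
  ultimately show ?case using dsa_Suc_parts(4)[of q gf W Wt alpha x0 omega 0]
    unfolding X_def[symmetric] Y_def[symmetric] G_def[symmetric] by (simp add: G_def)
next
  case (Suc t)
  have f: "fst (dsa q gf W Wt alpha x0 omega (Suc t)) = X t"
    using dsa_Suc_parts(1)[of q gf W Wt alpha x0 omega t] unfolding X_def .
  have g: "snd (snd (snd (dsa q gf W Wt alpha x0 omega (Suc t)))) = G t"
    using dsa_Suc_parts(2)[of q gf W Wt alpha x0 omega t] unfolding X_def Y_def G_def .
  have x0: "X (Suc (Suc t)) = X (Suc t) + Zop W (X (Suc t)) - Zop Wt (fst (dsa q gf W Wt alpha x0 omega (Suc t)))
      - alpha *\<^sub>R (G (Suc t) - snd (snd (snd (dsa q gf W Wt alpha x0 omega (Suc t)))))"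
    using dsa_Suc_parts(4)[of q gf W Wt alpha x0 omega "Suc t"]
    unfolding X_def Y_def G_def by (simp only: nat.distinct if_False)
  have x: "X (Suc (Suc t)) = X (Suc t) + Zop W (X (Suc t)) - Zop Wt (X t) - alpha *\<^sub>R (G (Suc t) - G t)"
    unfolding x0 f g ..
  have v: "V (Suc t) = V t + Zop U (X (Suc t))"
    by (simp add: V_def dsa_v_def X_def)
  have uu: "Zop U (Zop U (X (Suc t))) = Zop Wt (X (Suc t)) - Zop W (X (Suc t))"
    by (simp add: Zop_comp U_sq Zop_mdiff)
  have ab: "\<And>(a::real^'b^'c) b g0 g1 u w tX s. a = b - s *\<^sub>R g0 - u \<Longrightarrow>
      a + w - b - s *\<^sub>R (g1 - g0) = tX - s *\<^sub>R g1 - (u + (tX - w))"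
    by (simp add: algebra_simps)
  show ?case unfolding x v Zop_add uu by (rule ab[OF Suc.IH])
qed


lemma PiE_UNIV_dflt: "PiE_dflt UNIV d B = PiE UNIV B"
  by (auto simp: PiE_dflt_def PiE_def extensional_def)

lemma avg_node:
  fixes B :: "'n::finite \<Rightarrow> 'b set" and psi :: "'b \<Rightarrow> real"
  assumes fin: "\<And>n. finite (B n)" and ne: "\<And>n. B n \<noteq> {}"
  shows "(\<Sum>j\<in>PiE UNIV B. psi (j n)) / real (card (PiE UNIV B)) = (\<Sum>i\<in>B n. psi i) / real (card (B n))"
proof -
  define S where "S = PiE UNIV B"
  have fS: "finite S" unfolding S_def using fin by (simp add: finite_PiE)
  have nS: "S \<noteq> {}" unfolding S_def using ne by (simp add: PiE_eq_empty_iff)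
  obtain d :: 'b where True by blast
  have P: "pmf_of_set S = Pi_pmf UNIV d (\<lambda>n. pmf_of_set (B n))"
    unfolding S_def using Pi_pmf_of_set[of UNIV B d] fin ne by (simp add: PiE_UNIV_dflt)
  have M: "map_pmf (\<lambda>j. j n) (pmf_of_set S) = pmf_of_set (B n)"
    unfolding P by (simp add: Pi_pmf_component)
  have "(\<Sum>j\<in>S. psi (j n)) / real (card S) = measure_pmf.expectation (pmf_of_set S) (\<lambda>j. psi (j n))"
    using fS nS by (simp add: integral_pmf_of_set)
  also have "\<dots> = measure_pmf.expectation (map_pmf (\<lambda>j. j n) (pmf_of_set S)) psi" by simp
  also have "\<dots> = (\<Sum>i\<in>B n. psi i) / real (card (B n))" unfolding M using fin ne by (simp add: integral_pmf_of_set)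
  finally show ?thesis unfolding S_def .
qed


lemma Zop_mat1: "Zop (mat 1) (x::real^'p::finite^'n::finite) = x"
proof -
  have "(\<Sum>m\<in>UNIV. (mat 1 :: real^'n^'n) $ n $ m *\<^sub>R x $ m) = x $ n" for n
  proof -
    have "(\<Sum>m\<in>UNIV. (mat 1 :: real^'n^'n) $ n $ m *\<^sub>R x $ m) = (\<Sum>m\<in>UNIV. if n = m then x $ m else 0)"
      by (intro sum.cong refl) (simp add: mat_def)
    also have "\<dots> = x $ n" by (simp add: sum.delta)
    finally show ?thesis .
  qed
  thus ?thesis by (simp add: Zop_def vec_eq_iff)
qed

lemma Zop_madd: "Zop (A + B) x = Zop A x + Zop B x"
  by (simp add: Zop_def vec_eq_iff scaleR_add_left sum.distrib)

lemma Zop_mscale: "Zop (c *\<^sub>R A) x = c *\<^sub>R Zop A x"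
  by (simp add: Zop_def vec_eq_iff scaleR_sum_right)

lemma quad_le:
  assumes "\<forall>z. z \<bullet> (A *v z) \<le> z \<bullet> (B *v z)"
  shows "x \<bullet> Zop A x \<le> x \<bullet> Zop B x"
  unfolding Zop_quad_col using assms by (intro sum_mono) auto

lemma norm3: "(norm (a - b - c :: 'v::real_inner))\<^sup>2 \<le> 3 * ((norm a)\<^sup>2 + (norm b)\<^sup>2 + (norm c)\<^sup>2)"
proof -
  have "0 \<le> (norm (a + b))\<^sup>2 + (norm (a + c))\<^sup>2 + (norm (b - c))\<^sup>2" by simp
  moreover have "(norm (a - b - c))\<^sup>2 + ((norm (a + b))\<^sup>2 + (norm (a + c))\<^sup>2 + (norm (b - c))\<^sup>2)
      = 3 * ((norm a)\<^sup>2 + (norm b)\<^sup>2 + (norm c)\<^sup>2)"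
    unfolding power2_norm_eq_inner
    by (simp add: inner_diff_left inner_diff_right inner_add_left inner_add_right inner_commute)
  ultimately show ?thesis by linarith
qed

lemma fix_from_null:
  assumes "span {vec 1} \<subseteq> {z. (mat 1 - A) *v z = 0}"
  shows "A *v vec 1 = (vec 1 :: real^'n)"
proof -
  have "vec 1 \<in> span {vec 1 :: real^'n}" by (simp add: span_base)
  hence "(mat 1 - A) *v vec 1 = (0::real^'n)" using assms by auto
  thus ?thesis by (simp add: matrix_vector_mult_diff_rdistrib)
qed

lemma norm_vec_sq: "(norm (x :: real^'p^'n))\<^sup>2 = (\<Sum>n\<in>UNIV. (norm (x $ n))\<^sup>2)"
  unfolding power2_norm_eq_inner inner_vec_def[of x x] ..

lemma avg_sum_node:
  fixes B :: "'n::finite \<Rightarrow> 'b set" and psi :: "'n \<Rightarrow> 'b \<Rightarrow> real"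
  assumes fin: "\<And>n. finite (B n)" and ne: "\<And>n. B n \<noteq> {}"
  shows "(\<Sum>j\<in>PiE UNIV B. \<Sum>n\<in>UNIV. psi n (j n)) / real (card (PiE UNIV B))
       = (\<Sum>n\<in>UNIV. (\<Sum>i\<in>B n. psi n i) / real (card (B n)))"
proof -
  have "(\<Sum>j\<in>PiE UNIV B. \<Sum>n\<in>UNIV. psi n (j n)) = (\<Sum>n\<in>UNIV. \<Sum>j\<in>PiE UNIV B. psi n (j n))"
    by (rule sum.swap)
  hence "(\<Sum>j\<in>PiE UNIV B. \<Sum>n\<in>UNIV. psi n (j n)) / real (card (PiE UNIV B))
      = (\<Sum>n\<in>UNIV. (\<Sum>j\<in>PiE UNIV B. psi n (j n)) / real (card (PiE UNIV B)))"
    by (simp add: sum_divide_distrib)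
  also have "\<dots> = (\<Sum>n\<in>UNIV. (\<Sum>i\<in>B n. psi n i) / real (card (B n)))"
    by (intro sum.cong refl avg_node[OF fin ne])
  finally show ?thesis .
qed

lemma U_iso:
  assumes U_sym: "transpose U = U"
  shows "\<exists>e>0. \<forall>v\<in>range (Zop U :: real^'p::finite^'n::finite \<Rightarrow> _). e * norm v \<le> norm (Zop U v)"
proof -
  have sub: "subspace (range (Zop U :: real^'p^'n \<Rightarrow> _))"
    by (rule linear_subspace_image[OF linear_Zop subspace_UNIV])
  have bl: "bounded_linear (Zop U :: real^'p^'n \<Rightarrow> _)" using linear_Zop linear_conv_bounded_linear by blast
  have inj: "\<forall>v\<in>range (Zop U :: real^'p^'n \<Rightarrow> _). Zop U v = 0 \<longrightarrow> v = 0"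
  proof (intro ballI impI)
    fix v :: "real^'p^'n" assume "v \<in> range (Zop U)" and z: "Zop U v = 0"
    then obtain y where y: "v = Zop U y" by blast
    have "Zop U y \<bullet> Zop U y = y \<bullet> Zop U (Zop U y)" by (rule Zop_sym[OF U_sym])
    also have "\<dots> = 0" using z y by simp
    finally show "v = 0" using y by simp
  qed
  show ?thesis using injective_imp_isometric[OF closed_subspace[OF sub] sub bl inj]
    by (simp add: mult.commute)
qed

lemma Zop_bounded: "\<exists>B\<ge>0. \<forall>x::real^'p::finite^'n::finite. norm (Zop A x) \<le> B * norm x"
proof -
  obtain B where B: "\<forall>x::real^'p^'n. norm (Zop A x) \<le> B * norm x"
    using linear_bounded[OF linear_Zop] by blast
  have "\<forall>x::real^'p^'n. norm (Zop A x) \<le> max B 0 * norm x"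
    using B by (metis max.cobounded1 mult_right_mono norm_ge_zero order_trans)
  thus ?thesis by (intro exI[of _ "max B 0"]) auto
qed


lemma pointwise_arith:
  fixes Lp Lo Q Vv p pp Xn Dn Wn de :: real
  assumes a: "Lp - Lo \<le> - gp * Wn - 2 * alpha * de + k0 * Dn + c * (pp - p)"
    and b: "Lo = Q + Vv + c * p" and Q: "Q \<le> K2 * Xn" and V: "Vv \<le> Kv * (3 * (K1 * Xn + alpha\<^sup>2 * Dn + Wn))"
    and dl: "0 \<le> dl" and dg: "3 * dl * Kv \<le> gp" and W0: "0 \<le> Wn"
  shows "Lp \<le> (1 - dl) * Lo + (- 2 * alpha * de + (k0 + dl * (3 * Kv * alpha\<^sup>2)) * Dn + c * pp - c * p
            + dl * (K2 + 3 * Kv * K1) * Xn + dl * c * p)"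
proof -
  have "dl * Lo \<le> dl * (K2 * Xn + Kv * (3 * (K1 * Xn + alpha\<^sup>2 * Dn + Wn)) + c * p)"
    using b Q V dl by (intro mult_left_mono) auto
  moreover have "dl * (K2 * Xn + Kv * (3 * (K1 * Xn + alpha\<^sup>2 * Dn + Wn)) + c * p)
     = dl * (K2 + 3 * Kv * K1) * Xn + dl * (3 * Kv * alpha\<^sup>2) * Dn + (3 * dl * Kv) * Wn + dl * c * p"
    by (simp add: algebra_simps)
  moreover have "(3 * dl * Kv) * Wn \<le> gp * Wn" using dg W0 by (rule mult_right_mono)
  moreover have "(k0 + dl * (3 * Kv * alpha\<^sup>2)) * Dn = k0 * Dn + dl * (3 * Kv * alpha\<^sup>2) * Dn"
    by (simp add: algebra_simps)
  moreover have "c * (pp - p) = c * pp - c * p" by (simp add: algebra_simps)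
  moreover have "(1 - dl) * Lo = Lo - dl * Lo" by (simp add: algebra_simps)
  ultimately show ?thesis using a by linarith
qed

lemma avg_arith:
  fixes alpha mu L c qmin qmax dl K3 k0 k1 F p X H DD PP :: real
  assumes H: "F + mu / 2 * X \<le> H" and DD: "DD \<le> 4 * L * F + 4 * L * p - mu\<^sup>2 * X"
    and PP: "PP - p \<le> F / qmin - p / qmax"
    and F0: "0 \<le> F" and FX: "F \<le> L / 2 * X" and p0: "0 \<le> p" and X0: "0 \<le> X"
    and al: "0 < alpha" and c0: "0 < c" and L0: "0 < L" and k0: "0 \<le> k0" and k1: "0 \<le> k1" and dl: "0 \<le> dl"
    and m1: "dl * (4 * L * k1 + c) \<le> c / qmax - 4 * L * k0"
    and m2: "dl * (K3 + 2 * L\<^sup>2 * k1 + 1) \<le> alpha * mu + k0 * mu\<^sup>2 - max (c / qmin + 4 * L * k0 - 2 * alpha) 0 * L / 2"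
  shows "- 2 * alpha * H + (k0 + dl * k1) * DD + c * PP - c * p + dl * K3 * X + dl * c * p \<le> 0"
proof -
  define kap where "kap = k0 + dl * k1"
  have kap0: "0 \<le> kap" using k0 k1 dl by (simp add: kap_def)
  define AF where "AF = c / qmin + 4 * L * k0 - 2 * alpha"
  have 1: "- 2 * alpha * H \<le> - 2 * alpha * F - alpha * mu * X"
  proof -
    have "2 * alpha * (F + mu / 2 * X) \<le> 2 * alpha * H" using H al by (intro mult_left_mono) auto
    thus ?thesis by (simp add: algebra_simps)
  qed
  have 2: "kap * DD \<le> 4 * L * kap * F + 4 * L * kap * p - kap * mu\<^sup>2 * X"
  proof -
    have "kap * DD \<le> kap * (4 * L * F + 4 * L * p - mu\<^sup>2 * X)" using DD kap0 by (rule mult_left_mono)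
    thus ?thesis by (simp add: algebra_simps)
  qed
  have 3: "c * PP - c * p \<le> c * F / qmin - c * p / qmax"
  proof -
    have "c * (PP - p) \<le> c * (F / qmin - p / qmax)" using PP c0 by (intro mult_left_mono) auto
    thus ?thesis by (simp add: algebra_simps)
  qed
  have 4: "(4 * L * kap - c / qmax + dl * c) * p \<le> 0"
  proof -
    have "4 * L * kap - c / qmax + dl * c = (4 * L * k0 - c / qmax) + dl * (4 * L * k1 + c)"
      by (simp add: kap_def algebra_simps)
    also have "\<dots> \<le> 0" using m1 by linarith
    finally show ?thesis using p0 by (simp add: mult_nonpos_nonneg)
  qed
  have 5: "(AF + 4 * L * k1 * dl) * F \<le> max AF 0 * L / 2 * X + 2 * L\<^sup>2 * k1 * dl * X"
  proof -
    have "(AF + 4 * L * k1 * dl) * F = AF * F + 4 * L * k1 * dl * F" by (simp add: algebra_simps)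
    moreover have "AF * F \<le> max AF 0 * F" using F0 by (intro mult_right_mono) auto
    moreover have "max AF 0 * F \<le> max AF 0 * (L / 2 * X)" using FX by (intro mult_left_mono) auto
    moreover have "4 * L * k1 * dl * F \<le> 4 * L * k1 * dl * (L / 2 * X)"
      using FX L0 k1 dl by (intro mult_left_mono) auto
    moreover have "4 * L * k1 * dl * (L / 2 * X) = 2 * L\<^sup>2 * k1 * dl * X" by (simp add: power2_eq_square)
    moreover have "max AF 0 * (L / 2 * X) = max AF 0 * L / 2 * X" by simp
    ultimately show ?thesis by linarith
  qed
  have 6: "(- alpha * mu - kap * mu\<^sup>2 + dl * K3 + max AF 0 * L / 2 + 2 * L\<^sup>2 * k1 * dl) * X \<le> 0"
  proof -
    have "- alpha * mu - kap * mu\<^sup>2 + dl * K3 + max AF 0 * L / 2 + 2 * L\<^sup>2 * k1 * dl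
        = (- alpha * mu - k0 * mu\<^sup>2 + max AF 0 * L / 2) + dl * (K3 + 2 * L\<^sup>2 * k1 + 1) - dl - dl * k1 * mu\<^sup>2"
      by (simp add: kap_def algebra_simps)
    also have "\<dots> \<le> 0"
    proof -
      have "0 \<le> dl * k1 * mu\<^sup>2" using dl k1 by simp
      thus ?thesis using m2 dl unfolding AF_def by linarith
    qed
    finally show ?thesis using X0 by (simp add: mult_nonpos_nonneg)
  qed
  have e: "- 2 * alpha * H + kap * DD + c * PP - c * p + dl * K3 * X + dl * c * p
    \<le> (4 * L * kap - c / qmax + dl * c) * p + (AF + 4 * L * k1 * dl) * F
       + (- alpha * mu - kap * mu\<^sup>2 + dl * K3) * X"
  proof -
    have "c * F / qmin = (c / qmin) * F" by simp
    have "(AF + 4 * L * k1 * dl) * F = c / qmin * F + 4 * L * kap * F - 2 * alpha * F"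
      by (simp add: AF_def kap_def algebra_simps)
    moreover have "(4 * L * kap - c / qmax + dl * c) * p = 4 * L * kap * p - c * p / qmax + dl * c * p"
      by (simp add: algebra_simps)
    moreover have "(- alpha * mu - kap * mu\<^sup>2 + dl * K3) * X = - alpha * mu * X - kap * mu\<^sup>2 * X + dl * K3 * X"
      by (simp add: algebra_simps)
    ultimately show ?thesis using 1 2 3 \<open>c * F / qmin = (c / qmin) * F\<close> by linarith
  qed
  have "(- alpha * mu - kap * mu\<^sup>2 + dl * K3) * X + max AF 0 * L / 2 * X + 2 * L\<^sup>2 * k1 * dl * X
     = (- alpha * mu - kap * mu\<^sup>2 + dl * K3 + max AF 0 * L / 2 + 2 * L\<^sup>2 * k1 * dl) * X"
    by (simp add: algebra_simps)
  with e 4 5 6 show ?thesis unfolding kap_def by linarith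
qed


lemma params:
  fixes mu L qmin qmax eta alpha c :: real
  assumes mu: "0 < mu" and Lmu: "mu \<le> L" and q1: "1 \<le> qmin" and qq: "qmin \<le> qmax"
    and eta: "L\<^sup>2 * qmax / (mu * qmin) + L\<^sup>2 / mu - L < eta"
    and al: "0 < alpha"
    and clb: "4 * alpha * L * qmax / eta < c"
    and cub: "c < 4 * alpha * mu * qmin / L - 2 * alpha * qmin * (2 * L - mu) / eta"
  shows "0 < eta" and "mu \<le> eta" and "0 < c" and "0 < c / qmax - 4 * L * (alpha / eta)"
    and "0 < alpha * mu + (alpha / eta) * mu\<^sup>2 - max (c / qmin + 4 * L * (alpha / eta) - 2 * alpha) 0 * L / 2"
proof -
  have L0: "0 < L" using mu Lmu by linarith
  have q0: "0 < qmin" "0 < qmax" using q1 qq by linarith+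
  have a1: "L\<^sup>2 / mu \<le> L\<^sup>2 * qmax / (mu * qmin)"
  proof -
    have "L\<^sup>2 * qmax / (mu * qmin) = (L\<^sup>2 / mu) * (qmax / qmin)" by (simp add: field_simps)
    moreover have "1 \<le> qmax / qmin" using qq q0 by simp
    moreover have "0 \<le> L\<^sup>2 / mu" using mu by simp
    ultimately show ?thesis by (metis mult_left_mono mult.right_neutral)
  qed
  have a2: "L \<le> L\<^sup>2 / mu"
  proof -
    have "L * mu \<le> L * L" using Lmu L0 by (intro mult_left_mono) auto
    thus ?thesis using mu by (simp add: field_simps power2_eq_square)
  qed
  have etaL: "L < eta" using eta a1 a2 by linarith
  show e0: "0 < eta" using etaL L0 by linarith
  show me: "mu \<le> eta" using etaL Lmu by linarith
  have "0 \<le> 4 * alpha * L * qmax / eta" using al L0 q0 e0 by simp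
  thus "0 < c" using clb by linarith
  show "0 < c / qmax - 4 * L * (alpha / eta)"
  proof -
    have "4 * alpha * L * qmax / eta = qmax * (4 * L * (alpha / eta))" by simp
    hence "qmax * (4 * L * (alpha / eta)) < c" using clb by linarith
    hence "4 * L * (alpha / eta) < c / qmax" using q0 by (simp add: pos_less_divide_eq mult.commute)
    thus ?thesis by simp
  qed
  show "0 < alpha * mu + (alpha / eta) * mu\<^sup>2 - max (c / qmin + 4 * L * (alpha / eta) - 2 * alpha) 0 * L / 2"
  proof (cases "c / qmin + 4 * L * (alpha / eta) - 2 * alpha \<le> 0")
    case True
    hence "max (c / qmin + 4 * L * (alpha / eta) - 2 * alpha) 0 = 0" by simp
    moreover have "0 < alpha * mu" using al mu by simp
    moreover have "0 \<le> (alpha / eta) * mu\<^sup>2" using al e0 by simp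
    ultimately show ?thesis by simp
  next
    case False
    define AF where "AF = c / qmin + 4 * L * (alpha / eta) - 2 * alpha"
    have mx: "max (c / qmin + 4 * L * (alpha / eta) - 2 * alpha) 0 = AF" using False by (simp add: AF_def)
    define R where "R = 4 * alpha * mu / L - 2 * alpha * (2 * L - mu) / eta"
    have "c < qmin * R" using cub by (simp add: R_def algebra_simps)
    hence cq: "c / qmin < R" using q0 by (simp add: pos_divide_less_eq mult.commute)
    have "AF * L / 2 < (R + 4 * L * (alpha / eta) - 2 * alpha) * L / 2"
      using cq L0 unfolding AF_def by (intro divide_strict_right_mono mult_strict_right_mono) auto
    also have "(R + 4 * L * (alpha / eta) - 2 * alpha) * L / 2 = 2 * alpha * mu + alpha * L * mu / eta - alpha * L"
      unfolding R_def using L0 e0 by (simp add: field_simps)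
    also have "\<dots> \<le> alpha * mu + (alpha / eta) * mu\<^sup>2"
    proof -
      have "alpha * (L - mu) * (mu / eta - 1) \<le> 0"
        using al Lmu me e0 by (intro mult_nonneg_nonpos) auto
      moreover have "alpha * (L - mu) * (mu / eta - 1) = alpha * L * mu / eta - alpha * L - (alpha / eta) * mu\<^sup>2 + alpha * mu"
        using e0 by (simp add: field_simps power2_eq_square)
      ultimately show ?thesis by linarith
    qed
    finally show ?thesis unfolding mx by linarith
  qed
qed



lemma vec_alg:
  fixes Xn X e xsc V v vs G d gs :: "real^'p::finite^'n::finite"
  assumes "Xn = Zop Wt X - alpha *\<^sub>R G - Zop U V" "X = e + xsc" "V = v + vs" "G = d + gs"
    "Zop Wt xsc = xsc" "alpha *\<^sub>R gs + Zop U vs = 0"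
  shows "Xn = xsc + (Zop Wt e - alpha *\<^sub>R d - Zop U v)"
proof -
  have g: "alpha *\<^sub>R gs = - Zop U vs" using assms(6) by (simp add: eq_neg_iff_add_eq_0)
  have "Xn = (Zop Wt e + Zop Wt xsc) - (alpha *\<^sub>R d + alpha *\<^sub>R gs) - (Zop U v + Zop U vs)"
    using assms(1-4) by (simp add: Zop_add scaleR_add_right)
  also have "\<dots> = xsc + (Zop Wt e - alpha *\<^sub>R d - Zop U v)" unfolding g assms(5) by (simp add: algebra_simps)
  finally show ?thesis .
qed

lemma avg_swap:
  fixes phi :: "nat \<Rightarrow> nat \<Rightarrow> real"
  shows "(1 / real k) * (\<Sum>l\<in>I. (1 / real k) * (\<Sum>i\<in>I. phi i l))
       = (1 / real k) * (\<Sum>i\<in>I. (1 / real k) * (\<Sum>l\<in>I. phi i l))"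
proof -
  have "(\<Sum>l\<in>I. (1 / real k) * (\<Sum>i\<in>I. phi i l)) = (1 / real k) * (\<Sum>l\<in>I. \<Sum>i\<in>I. phi i l)"
    by (simp add: sum_distrib_left)
  also have "(\<Sum>l\<in>I. \<Sum>i\<in>I. phi i l) = (\<Sum>i\<in>I. \<Sum>l\<in>I. phi i l)" by (rule sum.swap)
  also have "(1 / real k) * \<dots> = (\<Sum>i\<in>I. (1 / real k) * (\<Sum>l\<in>I. phi i l))"
    by (simp add: sum_distrib_left)
  finally show ?thesis by simp
qed

theorem theorem6:
  fixes E :: "'n::finite \<Rightarrow> 'n \<Rightarrow> bool"
    and q :: "'n \<Rightarrow> nat"
    and f :: "'n \<Rightarrow> nat \<Rightarrow> real^'p::finite \<Rightarrow> real"
    and gf :: "'n \<Rightarrow> nat \<Rightarrow> real^'p \<Rightarrow> real^'p"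
    and mu L :: real
    and W Wt U :: "real^'n^'n"
    and xs :: "real^'p" and vs :: "real^'p^'n"
    and x0 :: "real^'p^'n"
    and alpha eta c :: real
  assumes graph_sym: "\<forall>a b. E a b \<longrightarrow> E b a"
    and graph_irrefl: "\<forall>a. \<not> E a a"
    and graph_conn: "\<forall>a b. E\<^sup>*\<^sup>* a b"
    and q_pos: "\<forall>n. 1 \<le> q n"
    and grad: "\<forall>n. \<forall>i\<in>{1..q n}. \<forall>x. (f n i has_derivative (\<lambda>h. gf n i x \<bullet> h)) (at x)"
    and mu_pos: "0 < mu"
    and strconv: "\<forall>n. \<forall>i\<in>{1..q n}. strongly_convex_on UNIV mu (f n i)"
    and lipschitz: "\<forall>n. \<forall>i\<in>{1..q n}. L-lipschitz_on UNIV (gf n i)"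
    and xs_min: "\<forall>z. (\<Sum>n\<in>UNIV. (1 / real (q n)) * (\<Sum>i\<in>{1..q n}. f n i xs))
                    \<le> (\<Sum>n\<in>UNIV. (1 / real (q n)) * (\<Sum>i\<in>{1..q n}. f n i z))"
    and W_sparse: "\<forall>n m. W$n$m \<noteq> 0 \<longrightarrow> m = n \<or> E n m"
    and Wt_sparse: "\<forall>n m. Wt$n$m \<noteq> 0 \<longrightarrow> m = n \<or> E n m"
    and W_sym: "transpose W = W"
    and Wt_sym: "transpose Wt = Wt"
    and null_Wt: "span {vec 1} \<subseteq> {z. (mat 1 - Wt) *v z = 0}"
    and null_W: "{z. (mat 1 - W) *v z = 0} = span {vec 1}"
    and null_WtW: "{z. (Wt - W) *v z = 0} = span {vec 1}"
    and loewner1: "\<forall>z. z \<bullet> (W *v z) \<le> z \<bullet> (Wt *v z)"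
    and loewner2: "\<forall>z. z \<bullet> (Wt *v z) \<le> z \<bullet> (((1/2) *\<^sub>R (mat 1 + W)) *v z)"
    and Wt_pd: "\<forall>z. z \<noteq> 0 \<longrightarrow> 0 < z \<bullet> (Wt *v z)"
    and U_sym: "transpose U = U"
    and U_psd: "\<forall>z. 0 \<le> z \<bullet> (U *v z)"
    and U_sq: "U ** U = Wt - W"
    and vs_range: "vs \<in> range (Zop U)"
    and vs_opt: "alpha *\<^sub>R (\<chi> n. (1 / real (q n)) *\<^sub>R (\<Sum>i\<in>{1..q n}. gf n i xs)) + Zop U vs = 0"
    and eta: "L\<^sup>2 * real (Max (range q)) / (mu * real (Min (range q))) + L\<^sup>2 / mu - L < eta"
    and alpha_pos: "0 < alpha"
    and alpha_ub: "alpha < min_eig_kron Wt TYPE('p) / (2 * eta)"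
    and c_lb: "4 * alpha * L * real (Max (range q)) / eta < c"
    and c_ub: "c < 4 * alpha * mu * real (Min (range q)) / L
                   - 2 * alpha * real (Min (range q)) * (2 * L - mu) / eta"
  shows "\<exists>delta. 0 < delta \<and> delta < 1 \<and>
    (\<forall>omega. (\<forall>s n. omega s n \<in> {1..q n}) \<longrightarrow>
      (\<forall>t. measure_pmf.expectation (pmf_of_set (PiE UNIV (\<lambda>n. {1..q n})))
              (\<lambda>j. dsa_lyap q f gf W Wt U alpha c x0 xs vs (omega(t := j)) (Suc t))
           \<le> (1 - delta) * dsa_lyap q f gf W Wt U alpha c x0 xs vs omega t))"
proof -
  define qmin where "qmin = real (Min (range q))"
  define qmax where "qmax = real (Max (range q))"
  have fr: "finite (range q)" by simp
  have qmin_le: "qmin \<le> real (q n)" for n unfolding qmin_def using fr by simp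
  have qmax_ge: "real (q n) \<le> qmax" for n unfolding qmax_def using fr by simp
  have q1: "1 \<le> qmin"
  proof -
    have "Min (range q) \<in> range q" using fr by (intro Min_in) auto
    then obtain n where "Min (range q) = q n" by (metis rangeE)
    thus ?thesis using q_pos unfolding qmin_def by simp
  qed
  obtain n0 :: 'n where True by blast
  have qq: "qmin \<le> qmax" using qmin_le[of n0] qmax_ge[of n0] by linarith
  have Lmu: "mu \<le> L"
  proof -
    have i1: "1 \<in> {1..q n0}" using q_pos by auto
    define u :: "real^'p" where "u = (\<chi> k. 1)"
    have u0: "u \<noteq> 0" unfolding u_def by (simp add: vec_eq_iff)
    have d1: "\<forall>z. (f n0 1 has_derivative (\<lambda>h. gf n0 1 z \<bullet> h)) (at z)" using grad i1 by blast
    have s1: "strongly_convex_on UNIV mu (f n0 1)" using strconv i1 by blast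
    have l1: "L-lipschitz_on UNIV (gf n0 1)" using lipschitz i1 by blast
    have "f n0 1 xs + gf n0 1 xs \<bullet> (xs + u - xs) + mu / 2 * (norm (xs + u - xs))\<^sup>2 \<le> f n0 1 (xs + u)"
      by (rule sc_ineq[OF d1 s1])
    moreover have "f n0 1 (xs + u) \<le> f n0 1 xs + gf n0 1 xs \<bullet> (xs + u - xs) + L / 2 * (norm (xs + u - xs))\<^sup>2"
      by (rule descent[OF d1 l1])
    ultimately have "mu / 2 * (norm u)\<^sup>2 \<le> L / 2 * (norm u)\<^sup>2" by simp
    moreover have "0 < (norm u)\<^sup>2" using u0 by simp
    ultimately show ?thesis by simp
  qed
  have L0: "0 < L" using mu_pos Lmu by linarith
  note P = params[OF mu_pos Lmu q1 qq eta[folded qmin_def qmax_def] alpha_pos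
      c_lb[folded qmax_def] c_ub[folded qmin_def]]
  have eta0: "0 < eta" by (rule P(1))
  have c0: "0 < c" by (rule P(3))
  define gamma where "gamma = min_eig_kron Wt TYPE('p)"
  have ag: "alpha * eta < gamma / 2"
  proof -
    have "alpha * (2 * eta) < gamma" using alpha_ub eta0 unfolding gamma_def by (simp add: pos_less_divide_eq)
    thus ?thesis by simp
  qed
  define gp where "gp = gamma - alpha * eta"
  have gp0: "0 < gp"
  proof -
    have "0 < alpha * eta" using alpha_pos eta0 by simp
    thus ?thesis unfolding gp_def using ag by linarith
  qed
  define xsc :: "real^'p^'n" where "xsc = (\<chi> n. xs)"
  have Wt1: "Wt *v vec 1 = vec 1" by (rule fix_from_null[OF null_Wt])
  have W1: "W *v vec 1 = vec 1" by (rule fix_from_null) (use null_W in simp)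
  have Wtx: "Zop Wt xsc = xsc" unfolding xsc_def by (rule Zop_const[OF Wt1])
  have Wx: "Zop W xsc = xsc" unfolding xsc_def by (rule Zop_const[OF W1])
  have Ux: "Zop U xsc = 0"
  proof -
    have "Zop U xsc \<bullet> Zop U xsc = xsc \<bullet> Zop U (Zop U xsc)" by (rule Zop_sym[OF U_sym])
    also have "Zop U (Zop U xsc) = 0" by (simp add: Zop_comp U_sq Zop_mdiff Wtx Wx)
    finally show ?thesis by simp
  qed
  have l1z: "\<forall>z::real^'p^'n. z \<bullet> Zop W z \<le> z \<bullet> Zop Wt z"
    using quad_le loewner1 by blast
  have l2z: "\<forall>z::real^'p^'n. 2 * (z \<bullet> Zop Wt z) \<le> z \<bullet> z + z \<bullet> Zop W z"
  proof
    fix z :: "real^'p^'n"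
    have "z \<bullet> Zop Wt z \<le> z \<bullet> Zop ((1/2) *\<^sub>R (mat 1 + W)) z" using quad_le loewner2 by blast
    also have "Zop ((1/2) *\<^sub>R (mat 1 + W)) z = (1/2) *\<^sub>R (z + Zop W z)"
      by (simp add: Zop_mscale Zop_madd Zop_mat1)
    finally show "2 * (z \<bullet> Zop Wt z) \<le> z \<bullet> z + z \<bullet> Zop W z" by (simp add: inner_add_right)
  qed
  have gamz: "\<forall>z::real^'p^'n. gamma * (norm z)\<^sup>2 \<le> z \<bullet> Zop Wt z"
    unfolding gamma_def using gamma_bound[OF Wt_sym] by blast
  obtain Bw where Bw0: "0 \<le> Bw" and Bw: "\<forall>x::real^'p^'n. norm (Zop Wt x) \<le> Bw * norm x"
    using Zop_bounded by blast
  obtain eU where eU0: "0 < eU" and eU: "\<forall>v\<in>range (Zop U :: real^'p^'n \<Rightarrow> _). eU * norm v \<le> norm (Zop U v)"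
    using U_iso[OF U_sym] by blast
  define Kv where "Kv = 1 / eU\<^sup>2"
  define K1 where "K1 = (Bw + 1)\<^sup>2"
  define K2 where "K2 = Bw"
  define K3 where "K3 = K2 + 3 * Kv * K1"
  define k0 where "k0 = alpha / eta"
  define k1 where "k1 = 3 * Kv * alpha\<^sup>2"
  define m1 where "m1 = c / qmax - 4 * L * k0"
  define m2 where "m2 = alpha * mu + k0 * mu\<^sup>2 - max (c / qmin + 4 * L * k0 - 2 * alpha) 0 * L / 2"
  have Kv0: "0 < Kv" unfolding Kv_def using eU0 by simp
  have K30: "0 \<le> K3" unfolding K3_def K2_def K1_def using Bw0 Kv0 by simp
  have k00: "0 \<le> k0" unfolding k0_def using alpha_pos eta0 by simp
  have k10: "0 \<le> k1" unfolding k1_def using Kv0 by simp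
  have m10: "0 < m1" unfolding m1_def k0_def using P(4) .
  have m20: "0 < m2" unfolding m2_def k0_def using P(5) .
  define dl where "dl = min (1/2) (min (m1 / (4 * L * k1 + c)) (min (m2 / (K3 + 2 * L\<^sup>2 * k1 + 1)) (gp / (3 * Kv + 1))))"
  have den1: "0 < 4 * L * k1 + c"
  proof -
    have "0 \<le> 4 * L * k1" using L0 k10 by simp
    thus ?thesis using c0 by linarith
  qed
  have den2: "0 < K3 + 2 * L\<^sup>2 * k1 + 1"
  proof -
    have "0 \<le> 2 * L\<^sup>2 * k1" using k10 by simp
    thus ?thesis using K30 by linarith
  qed
  have den3: "0 < 3 * Kv + 1" using Kv0 by simp
  have dl0: "0 < dl" unfolding dl_def using m10 m20 gp0 den1 den2 den3 by simp
  have dl1: "dl < 1" unfolding dl_def by simp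
  have dlm1: "dl * (4 * L * k1 + c) \<le> m1"
  proof -
    have "dl \<le> m1 / (4 * L * k1 + c)" unfolding dl_def by simp
    thus ?thesis using den1 by (simp add: pos_le_divide_eq)
  qed
  have dlm2: "dl * (K3 + 2 * L\<^sup>2 * k1 + 1) \<le> m2"
  proof -
    have "dl \<le> m2 / (K3 + 2 * L\<^sup>2 * k1 + 1)" unfolding dl_def by simp
    thus ?thesis using den2 by (simp add: pos_le_divide_eq)
  qed
  have dlg: "3 * dl * Kv \<le> gp"
  proof -
    have "dl \<le> gp / (3 * Kv + 1)" unfolding dl_def by simp
    hence "dl * (3 * Kv + 1) \<le> gp" using den3 by (simp add: pos_le_divide_eq)
    thus ?thesis using dl0 by (simp add: algebra_simps)
  qed
  define gstar :: "real^'p^'n" where "gstar = (\<chi> n. (1 / real (q n)) *\<^sub>R (\<Sum>i\<in>{1..q n}. gf n i xs))"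
  have vsopt: "alpha *\<^sub>R gstar + Zop U vs = 0" using vs_opt unfolding gstar_def .
  show ?thesis
  proof (intro exI[of _ dl] conjI dl0 dl1 allI impI)
    fix omega :: "nat \<Rightarrow> 'n \<Rightarrow> nat" and t :: nat
    assume om: "\<forall>s n. omega s n \<in> {1..q n}"
    define S where "S = PiE UNIV (\<lambda>n. {1..q n})"
    have finS: "finite S" unfolding S_def by (simp add: finite_PiE)
    have neS: "S \<noteq> {}" unfolding S_def using q_pos by (simp add: PiE_eq_empty_iff)
    have cS: "0 < real (card S)" using finS neS by (simp add: card_gt_0_iff)
    define X where "X = dsa_x q gf W Wt alpha x0 omega t"
    define Y where "Y = dsa_y q gf W Wt alpha x0 omega t"
    define V where "V = dsa_v q gf W Wt U alpha x0 omega t"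
    define p where "p = dsa_p q f gf W Wt alpha x0 xs omega t"
    define e where "e = X - xsc"
    define v where "v = V - vs"
    define d where "d j = dsa_grad q gf X Y j - gstar" for j
    define e' where "e' j = Zop Wt e - alpha *\<^sub>R d j - Zop U v" for j
    define Dg where "Dg n i z = f n i z - f n i xs - gf n i xs \<bullet> (z - xs)" for n i z
    define pp where "pp j = (\<Sum>n\<in>UNIV. (1 / real (q n)) * (\<Sum>i\<in>{1..q n}. Dg n i (if i = j n then X $ n else Y n i)))" for j
    have Lo: "dsa_lyap q f gf W Wt U alpha c x0 xs vs omega t = e \<bullet> Zop Wt e + (norm v)\<^sup>2 + c * p"
      unfolding dsa_lyap_def Let_def e_def v_def X_def V_def p_def xsc_def ..
    have p_eq: "p = (\<Sum>n\<in>UNIV. (1 / real (q n)) * (\<Sum>i\<in>{1..q n}. Dg n i (Y n i)))"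
      unfolding p_def dsa_p_def Dg_def Y_def Let_def ..
    have Lp: "dsa_lyap q f gf W Wt U alpha c x0 xs vs (omega(t := j)) (Suc t)
        = e' j \<bullet> Zop Wt (e' j) + (norm (v + Zop U (e' j)))\<^sup>2 + c * pp j" for j
    proof -
      let ?o = "omega(t := j)"
      have cong: "dsa q gf W Wt alpha x0 ?o s = dsa q gf W Wt alpha x0 omega s" if "s \<le> t" for s
        using that by (intro dsa_cong) auto
      have xt: "dsa_x q gf W Wt alpha x0 ?o t = X" unfolding X_def dsa_x_def using cong by simp
      have yt: "dsa_y q gf W Wt alpha x0 ?o t = Y" unfolding Y_def dsa_y_def using cong by simp
      have vt: "dsa_v q gf W Wt U alpha x0 ?o t = V" unfolding V_def dsa_v_def dsa_x_def
        using cong by (intro sum.cong refl) auto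
      have inv: "dsa_x q gf W Wt alpha x0 ?o (Suc t) = Zop Wt X - alpha *\<^sub>R dsa_grad q gf X Y j - Zop U V"
        using dsa_invariant[OF U_sq, of q gf alpha x0 ?o t] unfolding xt yt vt by simp
      have xs1: "dsa_x q gf W Wt alpha x0 ?o (Suc t) = xsc + e' j"
        unfolding e'_def by (rule vec_alg[OF inv _ _ _ Wtx vsopt]) (simp_all add: e_def v_def d_def)
      have vs1: "dsa_v q gf W Wt U alpha x0 ?o (Suc t) - vs = v + Zop U (e' j)"
      proof -
        have "dsa_v q gf W Wt U alpha x0 ?o (Suc t) = V + Zop U (dsa_x q gf W Wt alpha x0 ?o (Suc t))"
          using vt by (simp add: dsa_v_def)
        thus ?thesis unfolding xs1 Zop_add Ux v_def by simp
      qed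
      have ys1: "dsa_y q gf W Wt alpha x0 ?o (Suc t) = (\<lambda>n i. if i = j n then X $ n else Y n i)"
        using dsa_Suc_parts(3)[of q gf W Wt alpha x0 ?o t] unfolding xt yt by simp
      have pp1: "dsa_p q f gf W Wt alpha x0 xs ?o (Suc t) = pp j"
        unfolding dsa_p_def pp_def Dg_def ys1 Let_def ..
      show ?thesis unfolding dsa_lyap_def Let_def xs1 vs1 pp1 by (simp add: xsc_def)
    qed
    have vrange: "v \<in> range (Zop U)"
    proof -
      have "V = Zop U (\<Sum>s\<in>{0..t}. dsa_x q gf W Wt alpha x0 omega s)"
        unfolding V_def dsa_v_def by (simp add: Zop_sum)
      moreover obtain z where "vs = Zop U z" using vs_range by blast
      ultimately have "v = Zop U ((\<Sum>s\<in>{0..t}. dsa_x q gf W Wt alpha x0 omega s) - z)"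
        unfolding v_def by (simp add: Zop_diff)
      thus ?thesis by blast
    qed
    define R0 where "R0 = - c * p + dl * K3 * (norm e)\<^sup>2 + dl * c * p"
    define T where "T j = - 2 * alpha * (d j \<bullet> e) + (k0 + dl * k1) * (norm (d j))\<^sup>2 + c * pp j + R0" for j
    have pw: "dsa_lyap q f gf W Wt U alpha c x0 xs vs (omega(t := j)) (Suc t)
        \<le> (1 - dl) * dsa_lyap q f gf W Wt U alpha c x0 xs vs omega t + T j" for j
    proof -
      define w where "w = e' j - e"
      have core: "e' j \<bullet> Zop Wt (e' j) + (norm (v + Zop U (e' j)))\<^sup>2 - (e \<bullet> Zop Wt e + (norm v)\<^sup>2)
          \<le> - (gamma - alpha * eta) * (norm (e' j - e))\<^sup>2 - 2 * alpha * (d j \<bullet> e) + (alpha / eta) * (norm (d j))\<^sup>2"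
        by (rule core_step[OF Wt_sym U_sym U_sq l1z l2z gamz alpha_pos eta0 e'_def refl])
      have Uv: "Zop U v = (Zop Wt e - e) - alpha *\<^sub>R d j - w" unfolding w_def e'_def by simp
      have Uv2: "(norm (Zop U v))\<^sup>2 \<le> 3 * (K1 * (norm e)\<^sup>2 + alpha\<^sup>2 * (norm (d j))\<^sup>2 + (norm w)\<^sup>2)"
      proof -
        have F1: "(norm (Zop U v))\<^sup>2 \<le> 3 * ((norm (Zop Wt e - e))\<^sup>2 + (norm (alpha *\<^sub>R d j))\<^sup>2 + (norm w)\<^sup>2)"
          unfolding Uv by (rule norm3)
        have n1: "norm (Zop Wt e - e) \<le> (Bw + 1) * norm e"
        proof -
          have "norm (Zop Wt e - e) \<le> norm (Zop Wt e) + norm e" by (rule norm_triangle_ineq4)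
          moreover have "norm (Zop Wt e) \<le> Bw * norm e" using Bw by blast
          moreover have "(Bw + 1) * norm e = Bw * norm e + norm e" by (simp add: distrib_right)
          ultimately show ?thesis by linarith
        qed
        have A: "(norm (Zop Wt e - e))\<^sup>2 \<le> K1 * (norm e)\<^sup>2"
          unfolding K1_def using n1 by (metis norm_ge_zero power_mono power_mult_distrib)
        have B: "(norm (alpha *\<^sub>R d j))\<^sup>2 = alpha\<^sup>2 * (norm (d j))\<^sup>2"
          by (simp add: power_mult_distrib)
        have "3 * ((norm (Zop Wt e - e))\<^sup>2 + (norm (alpha *\<^sub>R d j))\<^sup>2 + (norm w)\<^sup>2)
            \<le> 3 * (K1 * (norm e)\<^sup>2 + alpha\<^sup>2 * (norm (d j))\<^sup>2 + (norm w)\<^sup>2)"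
          using A unfolding B by simp
        with F1 show ?thesis by (rule order_trans)
      qed
      have vb: "(norm v)\<^sup>2 \<le> Kv * (3 * (K1 * (norm e)\<^sup>2 + alpha\<^sup>2 * (norm (d j))\<^sup>2 + (norm w)\<^sup>2))"
      proof -
        have "eU * norm v \<le> norm (Zop U v)" using eU vrange by blast
        hence "(eU * norm v)\<^sup>2 \<le> (norm (Zop U v))\<^sup>2" using eU0 by (intro power_mono) auto
        hence "eU\<^sup>2 * (norm v)\<^sup>2 \<le> 3 * (K1 * (norm e)\<^sup>2 + alpha\<^sup>2 * (norm (d j))\<^sup>2 + (norm w)\<^sup>2)"
          using Uv2 by (simp add: power_mult_distrib)
        thus ?thesis unfolding Kv_def using eU0 by (simp add: field_simps)
      qed
      have eq: "e \<bullet> Zop Wt e \<le> K2 * (norm e)\<^sup>2"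
      proof -
        have "e \<bullet> Zop Wt e \<le> norm e * norm (Zop Wt e)" by (rule norm_cauchy_schwarz)
        also have "\<dots> \<le> norm e * (Bw * norm e)" using Bw by (intro mult_left_mono) auto
        finally show ?thesis unfolding K2_def by (simp add: power2_eq_square algebra_simps)
      qed
      have a: "(e' j \<bullet> Zop Wt (e' j) + (norm (v + Zop U (e' j)))\<^sup>2 + c * pp j) - (e \<bullet> Zop Wt e + (norm v)\<^sup>2 + c * p)
          \<le> - gp * (norm w)\<^sup>2 - 2 * alpha * (d j \<bullet> e) + k0 * (norm (d j))\<^sup>2 + c * (pp j - p)"
        using core unfolding gp_def k0_def w_def by (simp add: algebra_simps)
      have "e' j \<bullet> Zop Wt (e' j) + (norm (v + Zop U (e' j)))\<^sup>2 + c * pp j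
          \<le> (1 - dl) * (e \<bullet> Zop Wt e + (norm v)\<^sup>2 + c * p)
            + (- 2 * alpha * (d j \<bullet> e) + (k0 + dl * (3 * Kv * alpha\<^sup>2)) * (norm (d j))\<^sup>2 + c * pp j - c * p
            + dl * (K2 + 3 * Kv * K1) * (norm e)\<^sup>2 + dl * c * p)"
        by (rule pointwise_arith[OF a refl eq vb less_imp_le[OF dl0] dlg]) simp
      thus ?thesis unfolding Lp Lo T_def R0_def k1_def K3_def by linarith
    qed
    have E: "measure_pmf.expectation (pmf_of_set S) (\<lambda>j. dsa_lyap q f gf W Wt U alpha c x0 xs vs (omega(t := j)) (Suc t))
        = (\<Sum>j\<in>S. dsa_lyap q f gf W Wt U alpha c x0 xs vs (omega(t := j)) (Suc t)) / real (card S)"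
      using finS neS by (simp add: integral_pmf_of_set)
    have sumT: "(\<Sum>j\<in>S. dsa_lyap q f gf W Wt U alpha c x0 xs vs (omega(t := j)) (Suc t))
        \<le> real (card S) * ((1 - dl) * dsa_lyap q f gf W Wt U alpha c x0 xs vs omega t) + (\<Sum>j\<in>S. T j)"
    proof -
      have "(\<Sum>j\<in>S. dsa_lyap q f gf W Wt U alpha c x0 xs vs (omega(t := j)) (Suc t))
          \<le> (\<Sum>j\<in>S. (1 - dl) * dsa_lyap q f gf W Wt U alpha c x0 xs vs omega t + T j)"
        by (rule sum_mono[OF pw])
      thus ?thesis by (simp add: sum.distrib)
    qed
    define a where "a n i = gf n i (X $ n) - gf n i xs" for n i
    define b where "b n i = gf n i (Y n i) - gf n i xs" for n i
    define bb where "bb n = (1 / real (q n)) *\<^sub>R (\<Sum>i\<in>{1..q n}. b n i)" for n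
    define Fn where "Fn n = (1 / real (q n)) * (\<Sum>i\<in>{1..q n}. Dg n i (X $ n))" for n
    define Pn where "Pn n = (1 / real (q n)) * (\<Sum>i\<in>{1..q n}. Dg n i (Y n i))" for n
    have dn: "d j $ n = a n (j n) - b n (j n) + bb n" for j n
    proof -
      have s: "bb n = (1 / real (q n)) *\<^sub>R (\<Sum>i\<in>{1..q n}. gf n i (Y n i)) - (1 / real (q n)) *\<^sub>R (\<Sum>i\<in>{1..q n}. gf n i xs)"
        unfolding bb_def b_def by (simp only: sum_subtractf scaleR_diff_right)
      have g: "d j $ n = gf n (j n) (X $ n) - gf n (j n) (Y n (j n)) + (1 / real (q n)) *\<^sub>R (\<Sum>i\<in>{1..q n}. gf n i (Y n i))
          - (1 / real (q n)) *\<^sub>R (\<Sum>i\<in>{1..q n}. gf n i xs)"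
        unfolding d_def dsa_grad_def gstar_def by simp
      show ?thesis unfolding g s a_def b_def by (simp add: algebra_simps)
    qed
    have nb: "(1 / real (q n)) * (\<Sum>i\<in>{1..q n}. (norm (a n i - b n i + bb n))\<^sup>2) \<le> 4 * L * Fn n + 4 * L * Pn n - mu\<^sup>2 * (norm (e $ n))\<^sup>2"
      and nh: "Fn n + mu / 2 * (norm (e $ n))\<^sup>2 \<le> (1 / real (q n)) * (\<Sum>i\<in>{1..q n}. (a n i - b n i + bb n) \<bullet> (e $ n))"
      and nF0: "0 \<le> Fn n" and nFX: "Fn n \<le> L / 2 * (norm (e $ n))\<^sup>2" and nP0: "0 \<le> Pn n"
      and np: "(1 / real (q n)) * (\<Sum>i\<in>{1..q n}. (1 / real (q n)) * (\<Sum>l\<in>{1..q n}. Dg n i (if i = l then X $ n else Y n i)))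
         = Fn n / real (q n) + (1 - 1 / real (q n)) * Pn n" for n
    proof -
      have en: "e $ n = X $ n - xs" by (simp add: e_def xsc_def)
      have h1: "1 \<le> q n" using q_pos by blast
      have h2: "\<forall>i\<in>{1..q n}. \<forall>z. (f n i has_derivative (\<lambda>h. gf n i z \<bullet> h)) (at z)" using grad by blast
      have h3: "\<forall>i\<in>{1..q n}. L-lipschitz_on UNIV (gf n i)" using lipschitz by blast
      have h4: "\<forall>i\<in>{1..q n}. strongly_convex_on UNIV mu (f n i)" using strconv by blast
      note N = node_bounds[OF h1 h2 h3 h4 mu_pos L0]
      show "(1 / real (q n)) * (\<Sum>i\<in>{1..q n}. (norm (a n i - b n i + bb n))\<^sup>2) \<le> 4 * L * Fn n + 4 * L * Pn n - mu\<^sup>2 * (norm (e $ n))\<^sup>2"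
        using N(1)[where x="X $ n" and xs=xs and y="Y n"] unfolding en a_def b_def bb_def Fn_def Pn_def Dg_def .
      show "Fn n + mu / 2 * (norm (e $ n))\<^sup>2 \<le> (1 / real (q n)) * (\<Sum>i\<in>{1..q n}. (a n i - b n i + bb n) \<bullet> (e $ n))"
        using N(2)[where x="X $ n" and xs=xs and y="Y n"] unfolding en a_def b_def bb_def Fn_def Pn_def Dg_def .
      show "0 \<le> Fn n" using N(3)[where x="X $ n" and xs=xs] unfolding Fn_def Dg_def .
      show "Fn n \<le> L / 2 * (norm (e $ n))\<^sup>2" using N(4)[where x="X $ n" and xs=xs] unfolding en Fn_def Dg_def .
      show "0 \<le> Pn n" using N(5)[where xs=xs and y="Y n"] unfolding Pn_def Dg_def .
      show "(1 / real (q n)) * (\<Sum>i\<in>{1..q n}. (1 / real (q n)) * (\<Sum>l\<in>{1..q n}. Dg n i (if i = l then X $ n else Y n i)))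
         = Fn n / real (q n) + (1 - 1 / real (q n)) * Pn n"
        using N(6)[where x="X $ n" and xs=xs and y="Y n"] unfolding Fn_def Pn_def Dg_def .
    qed
    define Ft where "Ft = (\<Sum>n\<in>UNIV. Fn n)"
    define X2 where "X2 = (norm e)\<^sup>2"
    have X2s: "X2 = (\<Sum>n\<in>UNIV. (norm (e $ n))\<^sup>2)" unfolding X2_def by (rule norm_vec_sq)
    have pP: "p = (\<Sum>n\<in>UNIV. Pn n)" unfolding p_eq Pn_def ..
    have cardq: "real (card {1..q n}) = real (q n)" for n by simp
    have fin1: "\<And>n. finite {1..q n}" by simp
    have ne1: "\<And>n. {1..q n} \<noteq> {}" using q_pos by auto
    define Hs where "Hs = (\<Sum>j\<in>S. d j \<bullet> e) / real (card S)"
    define DDs where "DDs = (\<Sum>j\<in>S. (norm (d j))\<^sup>2) / real (card S)"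
    define PPs where "PPs = (\<Sum>j\<in>S. pp j) / real (card S)"
    have Hs_eq: "Hs = (\<Sum>n\<in>UNIV. (1 / real (q n)) * (\<Sum>i\<in>{1..q n}. (a n i - b n i + bb n) \<bullet> (e $ n)))"
    proof -
      have "d j \<bullet> e = (\<Sum>n\<in>UNIV. (a n (j n) - b n (j n) + bb n) \<bullet> (e $ n))" for j
        unfolding inner_vec_def[of "d j" e] dn ..
      hence "Hs = (\<Sum>j\<in>S. \<Sum>n\<in>UNIV. (a n (j n) - b n (j n) + bb n) \<bullet> (e $ n)) / real (card S)"
        unfolding Hs_def by simp
      also have "\<dots> = (\<Sum>n\<in>UNIV. (\<Sum>i\<in>{1..q n}. (a n i - b n i + bb n) \<bullet> (e $ n)) / real (card {1..q n}))"
        unfolding S_def by (rule avg_sum_node[OF fin1 ne1])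
      finally show ?thesis unfolding cardq by simp
    qed
    have DDs_eq: "DDs = (\<Sum>n\<in>UNIV. (1 / real (q n)) * (\<Sum>i\<in>{1..q n}. (norm (a n i - b n i + bb n))\<^sup>2))"
    proof -
      have "(norm (d j))\<^sup>2 = (\<Sum>n\<in>UNIV. (norm (a n (j n) - b n (j n) + bb n))\<^sup>2)" for j
        unfolding norm_vec_sq[of "d j"] dn ..
      hence "DDs = (\<Sum>j\<in>S. \<Sum>n\<in>UNIV. (norm (a n (j n) - b n (j n) + bb n))\<^sup>2) / real (card S)"
        unfolding DDs_def by simp
      also have "\<dots> = (\<Sum>n\<in>UNIV. (\<Sum>i\<in>{1..q n}. (norm (a n i - b n i + bb n))\<^sup>2) / real (card {1..q n}))"
        unfolding S_def by (rule avg_sum_node[OF fin1 ne1])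
      finally show ?thesis unfolding cardq by simp
    qed
    have PPs_eq: "PPs = (\<Sum>n\<in>UNIV. Fn n / real (q n) + (1 - 1 / real (q n)) * Pn n)"
    proof -
      have "PPs = (\<Sum>n\<in>UNIV. (\<Sum>l\<in>{1..q n}. (1 / real (q n)) * (\<Sum>i\<in>{1..q n}. Dg n i (if i = l then X $ n else Y n i))) / real (card {1..q n}))"
        unfolding PPs_def pp_def S_def by (rule avg_sum_node[OF fin1 ne1])
      also have "\<dots> = (\<Sum>n\<in>UNIV. (1 / real (q n)) * (\<Sum>i\<in>{1..q n}. (1 / real (q n)) * (\<Sum>l\<in>{1..q n}. Dg n i (if i = l then X $ n else Y n i))))"
        unfolding cardq using avg_swap by (intro sum.cong refl) (simp add: divide_inverse mult.commute)
      also have "\<dots> = (\<Sum>n\<in>UNIV. Fn n / real (q n) + (1 - 1 / real (q n)) * Pn n)"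
        by (intro sum.cong refl np)
      finally show ?thesis .
    qed
    have H: "Ft + mu / 2 * X2 \<le> Hs"
    proof -
      have "(\<Sum>n\<in>UNIV. Fn n + mu / 2 * (norm (e $ n))\<^sup>2) \<le> Hs" unfolding Hs_eq by (rule sum_mono[OF nh])
      thus ?thesis unfolding Ft_def X2s by (simp add: sum.distrib sum_distrib_left)
    qed
    have DD: "DDs \<le> 4 * L * Ft + 4 * L * p - mu\<^sup>2 * X2"
    proof -
      have "DDs \<le> (\<Sum>n\<in>UNIV. 4 * L * Fn n + 4 * L * Pn n - mu\<^sup>2 * (norm (e $ n))\<^sup>2)" unfolding DDs_eq by (rule sum_mono[OF nb])
      thus ?thesis unfolding Ft_def X2s pP by (simp add: sum.distrib sum_subtractf sum_distrib_left)
    qed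
    have PP: "PPs - p \<le> Ft / qmin - p / qmax"
    proof -
      have "PPs - p = (\<Sum>n\<in>UNIV. Fn n / real (q n) - Pn n / real (q n))"
        unfolding PPs_eq pP by (simp add: sum_subtractf[symmetric] algebra_simps)
      also have "\<dots> \<le> (\<Sum>n\<in>UNIV. Fn n / qmin - Pn n / qmax)"
      proof (rule sum_mono)
        fix n :: 'n
        have qp: "0 < real (q n)" using q_pos by (metis of_nat_0_less_iff order_less_le_trans zero_less_one)
        have "Fn n / real (q n) \<le> Fn n / qmin" using nF0 qmin_le[of n] q1 by (intro divide_left_mono) auto
        moreover have "Pn n / qmax \<le> Pn n / real (q n)" using nP0 qmax_ge[of n] qp by (intro divide_left_mono) auto
        ultimately show "Fn n / real (q n) - Pn n / real (q n) \<le> Fn n / qmin - Pn n / qmax" by linarith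
      qed
      also have "\<dots> = Ft / qmin - p / qmax" unfolding Ft_def pP by (simp add: sum_subtractf sum_divide_distrib)
      finally show ?thesis .
    qed
    have F0: "0 \<le> Ft" unfolding Ft_def by (rule sum_nonneg) (rule nF0)
    have FX: "Ft \<le> L / 2 * X2" unfolding Ft_def X2s sum_distrib_left by (rule sum_mono[OF nFX])
    have p0: "0 \<le> p" unfolding pP by (rule sum_nonneg) (rule nP0)
    have X20: "0 \<le> X2" unfolding X2_def by simp
    have avgT: "(\<Sum>j\<in>S. T j) / real (card S)
        = - 2 * alpha * Hs + (k0 + dl * k1) * DDs + c * PPs - c * p + dl * K3 * X2 + dl * c * p"
    proof -
      have s1: "(\<Sum>j\<in>S. T j) = (\<Sum>j\<in>S. - 2 * alpha * (d j \<bullet> e)) + (\<Sum>j\<in>S. (k0 + dl * k1) * (norm (d j))\<^sup>2)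
          + (\<Sum>j\<in>S. c * pp j) + (\<Sum>j\<in>S. R0)"
        unfolding T_def by (simp only: sum.distrib)
      have s2: "(\<Sum>j\<in>S. - 2 * alpha * (d j \<bullet> e)) = - 2 * alpha * (\<Sum>j\<in>S. d j \<bullet> e)"
        by (rule sum_distrib_left[symmetric])
      have s3: "(\<Sum>j\<in>S. (k0 + dl * k1) * (norm (d j))\<^sup>2) = (k0 + dl * k1) * (\<Sum>j\<in>S. (norm (d j))\<^sup>2)"
        by (rule sum_distrib_left[symmetric])
      have s4: "(\<Sum>j\<in>S. c * pp j) = c * (\<Sum>j\<in>S. pp j)" by (rule sum_distrib_left[symmetric])
      have s5: "(\<Sum>j\<in>S. R0) = real (card S) * R0" by simp
      have "(\<Sum>j\<in>S. T j) / real (card S) = - 2 * alpha * Hs + (k0 + dl * k1) * DDs + c * PPs + R0"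
        unfolding s1 s2 s3 s4 s5 Hs_def DDs_def PPs_def using cS by (simp add: field_simps)
      thus ?thesis unfolding R0_def X2_def by simp
    qed
    have Tneg: "(\<Sum>j\<in>S. T j) / real (card S) \<le> 0"
      unfolding avgT
      by (rule avg_arith[OF H DD PP F0 FX p0 X20 alpha_pos c0 L0 k00 k10 less_imp_le[OF dl0] dlm1[unfolded m1_def] dlm2[unfolded m2_def]])
    have "measure_pmf.expectation (pmf_of_set (PiE UNIV (\<lambda>n. {1..q n})))
            (\<lambda>j. dsa_lyap q f gf W Wt U alpha c x0 xs vs (omega(t := j)) (Suc t))
        \<le> (1 - dl) * dsa_lyap q f gf W Wt U alpha c x0 xs vs omega t + (\<Sum>j\<in>S. T j) / real (card S)"
      unfolding S_def[symmetric] E using sumT cS by (simp add: field_simps)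
    thus "measure_pmf.expectation (pmf_of_set (PiE UNIV (\<lambda>n. {1..q n})))
            (\<lambda>j. dsa_lyap q f gf W Wt U alpha c x0 xs vs (omega(t := j)) (Suc t))
        \<le> (1 - dl) * dsa_lyap q f gf W Wt U alpha c x0 xs vs omega t" using Tneg by linarith
  qed
qed

end
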